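(* Let $k\ge1$, let $(T,o)$ be a valid finite rooted tree, and let $D$ be a signed incidence matrix of $T$, i.e. the real $V(T)\times U(T)$ matrix with $D_{v,u}\in\{1,-1\}$ if $vu$ is an edge of $T$ and $D_{v,u}=0$ otherwise. Let $V(T)=K\uplus J$ be a partition with $m(K,T)>0$ and let $v_0\in J$. Then there exists $\varphi\in\mathbb R^{V(T)}$ such that (i) $\varphi^TD=0$, (ii) $\varphi(v_0)=1$, and (iii) \[\sum_{v\in J}\varphi(v)^2=\frac{m(K,T)}{m(K,T)-m(K\cup\{v_0\},T)}.\]
   Context: Trees. For a finite rooted tree $(T,o)$, the height of a vertex is its distance from $o$ and the height of $T$ is the maximal height of a vertex. Vertices of even (odd) height are called even (odd); $V(T)$ and $U(T)$ denote the sets of even and odd vertices. $(T,o)$ is valid if its height is even and every odd vertex has degree exactly $k+1$ in $T$. For $K\subset V(T)$, $m(K,T)$ is the number of matchings of $T$ in which every vertex of $K\cup U(T)$ is saturated (the denominator in (iii) is positive). *)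

theory Defs
  imports Complex_Main
begin

definition simple_graph :: "'a set \<Rightarrow> 'a set set \<Rightarrow> bool" where
  "simple_graph Vs E \<longleftrightarrow> finite Vs \<and>
     (\<forall>e\<in>E. \<exists>x y. x \<noteq> y \<and> x \<in> Vs \<and> y \<in> Vs \<and> e = {x, y})"

definition is_walk :: "'a set set \<Rightarrow> 'a list \<Rightarrow> bool" where
  "is_walk E p \<longleftrightarrow> p \<noteq> [] \<and> (\<forall>i. Suc i < length p \<longrightarrow> {p ! i, p ! Suc i} \<in> E)"

definition connected_graph :: "'a set \<Rightarrow> 'a set set \<Rightarrow> bool" where
  "connected_graph Vs E \<longleftrightarrow>
     (\<forall>x\<in>Vs. \<forall>y\<in>Vs. \<exists>p. is_walk E p \<and> hd p = x \<and> last p = y)"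

definition has_cycle :: "'a set set \<Rightarrow> bool" where
  "has_cycle E \<longleftrightarrow> (\<exists>p. length p \<ge> 3 \<and> distinct p \<and> is_walk E p \<and> {last p, hd p} \<in> E)"

definition is_tree :: "'a set \<Rightarrow> 'a set set \<Rightarrow> bool" where
  "is_tree Vs E \<longleftrightarrow> simple_graph Vs E \<and> Vs \<noteq> {} \<and> connected_graph Vs E \<and> \<not> has_cycle E"

definition gdist :: "'a set set \<Rightarrow> 'a \<Rightarrow> 'a \<Rightarrow> nat" where
  "gdist E x y = (LEAST n. \<exists>p. is_walk E p \<and> hd p = x \<and> last p = y \<and> length p = Suc n)"

definition even_verts :: "'a set \<Rightarrow> 'a set set \<Rightarrow> 'a \<Rightarrow> 'a set" where
  "even_verts Vs E r = {v \<in> Vs. even (gdist E r v)}"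

definition odd_verts :: "'a set \<Rightarrow> 'a set set \<Rightarrow> 'a \<Rightarrow> 'a set" where
  "odd_verts Vs E r = {v \<in> Vs. odd (gdist E r v)}"

definition tree_height :: "'a set \<Rightarrow> 'a set set \<Rightarrow> 'a \<Rightarrow> nat" where
  "tree_height Vs E r = Max (gdist E r ` Vs)"

definition degree :: "'a set set \<Rightarrow> 'a \<Rightarrow> nat" where
  "degree E v = card {e \<in> E. v \<in> e}"

definition valid_tree :: "nat \<Rightarrow> 'a set \<Rightarrow> 'a set set \<Rightarrow> 'a \<Rightarrow> bool" where
  "valid_tree k Vs E r \<longleftrightarrow> is_tree Vs E \<and> r \<in> Vs \<and> even (tree_height Vs E r) \<and>
     (\<forall>u\<in>odd_verts Vs E r. degree E u = k + 1)"

definition is_matching :: "'a set set \<Rightarrow> 'a set set \<Rightarrow> bool" where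
  "is_matching E M \<longleftrightarrow> M \<subseteq> E \<and> (\<forall>e1\<in>M. \<forall>e2\<in>M. e1 \<noteq> e2 \<longrightarrow> e1 \<inter> e2 = {})"

definition mcount :: "'a set \<Rightarrow> 'a set set \<Rightarrow> 'a \<Rightarrow> 'a set \<Rightarrow> nat" where
  "mcount Vs E r K = card {M. is_matching E M \<and> K \<union> odd_verts Vs E r \<subseteq> \<Union>M}"

definition signed_incidence :: "'a set \<Rightarrow> 'a set set \<Rightarrow> 'a \<Rightarrow> ('a \<Rightarrow> 'a \<Rightarrow> real) \<Rightarrow> bool" where
  "signed_incidence Vs E r D \<longleftrightarrow>
     (\<forall>v\<in>even_verts Vs E r. \<forall>u\<in>odd_verts Vs E r.
        (if {v, u} \<in> E then D v u = 1 \<or> D v u = -1 else D v u = 0))"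

end

theory Submission
  imports Defs
begin

lemma is_walk_append:
  assumes "is_walk E p" "is_walk E q" "{last p, hd q} \<in> E"
  shows "is_walk E (p @ q)"
  unfolding is_walk_def
proof (intro conjI allI impI)
  show "p @ q \<noteq> []" using assms(1) by (simp add: is_walk_def)
  fix i assume i: "Suc i < length (p @ q)"
  have pne: "p \<noteq> []" and qne: "q \<noteq> []" using assms by (auto simp: is_walk_def)
  consider "Suc i < length p" | "Suc i = length p" | "Suc i > length p" by linarith
  then show "{(p @ q) ! i, (p @ q) ! Suc i} \<in> E"
  proof cases
    case 1 then show ?thesis using assms(1) by (simp add: is_walk_def nth_append)
  next
    case 2 then have ii: "i = length p - 1" by simp
    have "(p @ q) ! i = last p" using pne 2 unfolding ii by (simp add: nth_append last_conv_nth)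
    moreover have "(p @ q) ! Suc i = hd q" using 2 qne by (simp add: nth_append hd_conv_nth)
    ultimately show ?thesis using assms(3) by simp
  next
    case 3
    then have "(p @ q) ! i = q ! (i - length p)" "(p @ q) ! Suc i = q ! Suc (i - length p)"
      by (auto simp: nth_append Suc_diff_le)
    moreover have "Suc (i - length p) < length q" using 3 i by simp
    ultimately show ?thesis using assms(2) by (simp add: is_walk_def)
  qed
qed

lemma is_walk_snoc:
  assumes "is_walk E p" "{last p, y} \<in> E" shows "is_walk E (p @ [y])"
  using is_walk_append[of E p "[y]"] assms by (simp add: is_walk_def)

lemma is_walk_drop:
  assumes "is_walk E p" "i < length p" shows "is_walk E (drop i p)"
  using assms unfolding is_walk_def by (auto simp: add.commute[of i] simp del: add_Suc_right)

lemma is_walk_take: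
  assumes "is_walk E p" "0 < j" shows "is_walk E (take j p)"
  using assms unfolding is_walk_def by auto

lemma insert_commute2: "{a, b} = {b, a}" by auto

lemma is_walk_rev:
  assumes "is_walk E p" shows "is_walk E (rev p)"
  unfolding is_walk_def
proof (intro conjI allI impI)
  show "rev p \<noteq> []" using assms by (simp add: is_walk_def)
  fix i assume i: "Suc i < length (rev p)"
  let ?n = "length p"
  have "rev p ! i = p ! (?n - Suc i)" "rev p ! Suc i = p ! (?n - Suc (Suc i))"
    using i by (auto simp: rev_nth)
  moreover have "Suc (?n - Suc (Suc i)) = ?n - Suc i" using i by simp
  moreover have "Suc (?n - Suc (Suc i)) < ?n" using i by simp
  ultimately show "{rev p ! i, rev p ! Suc i} \<in> E" using assms unfolding is_walk_def
    by (metis insert_commute2)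
qed

lemma gdist_le:
  assumes "is_walk E p" "hd p = r" "last p = x"
  shows "gdist E r x \<le> length p - 1"
proof -
  have "p \<noteq> []" using assms by (simp add: is_walk_def)
  then have "length p = Suc (length p - 1)" by simp
  then show ?thesis unfolding gdist_def using assms
    by (intro Least_le) (metis)
qed

lemma gdist_ex:
  assumes "is_walk E p" "hd p = r" "last p = x"
  shows "\<exists>q. is_walk E q \<and> hd q = r \<and> last q = x \<and> length q = Suc (gdist E r x)"
proof -
  have "p \<noteq> []" using assms by (simp add: is_walk_def)
  then have "\<exists>n. \<exists>q. is_walk E q \<and> hd q = r \<and> last q = x \<and> length q = Suc n"
    using assms by (metis Suc_pred length_greater_0_conv)
  then show ?thesis unfolding gdist_def by (rule LeastI_ex)
qed

lemma gdist_prefix: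
  assumes "is_walk E p" "hd p = r" "length p = Suc (gdist E r (last p))" "i < length p"
  shows "gdist E r (p ! i) = i"
proof -
  have pne: "p \<noteq> []" using assms by (simp add: is_walk_def)
  have w1: "is_walk E (take (Suc i) p)" by (rule is_walk_take[OF assms(1)]) simp
  have "hd (take (Suc i) p) = r" using assms pne by (simp add: hd_conv_nth)
  moreover have "last (take (Suc i) p) = p ! i" using assms(4) by (simp add: take_Suc_conv_app_nth)
  ultimately have le: "gdist E r (p ! i) \<le> i" using gdist_le[OF w1] assms(4) by fastforce
  show ?thesis
  proof (rule ccontr)
    assume "gdist E r (p ! i) \<noteq> i"
    then have lt: "gdist E r (p ! i) < i" using le by simp
    obtain q where q: "is_walk E q" "hd q = r" "last q = p ! i" "length q = Suc (gdist E r (p ! i))"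
      using gdist_ex[OF w1] \<open>hd (take (Suc i) p) = r\<close> \<open>last (take (Suc i) p) = p ! i\<close> by blast
    show False
    proof (cases "Suc i < length p")
      case True
      have wd: "is_walk E (drop (Suc i) p)" by (rule is_walk_drop[OF assms(1) True])
      have "hd (drop (Suc i) p) = p ! Suc i" using True by (simp add: hd_drop_conv_nth)
      moreover have "{p ! i, p ! Suc i} \<in> E" using assms(1) True by (simp add: is_walk_def)
      ultimately have w: "is_walk E (q @ drop (Suc i) p)" using is_walk_append[OF q(1) wd] q(3) by simp
      have "hd (q @ drop (Suc i) p) = r" using q by (cases q) (auto simp: is_walk_def)
      moreover have "last (q @ drop (Suc i) p) = last p" using True by (simp add: last_drop)
      ultimately have "gdist E r (last p) \<le> length (q @ drop (Suc i) p) - 1"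
        using gdist_le[OF w] by simp
      then show False using lt q(4) assms(3) True by simp
    next
      case False
      then have "i = length p - 1" using assms(4) by simp
      then have "p ! i = last p" using pne by (simp add: last_conv_nth)
      then show False using lt assms(3) \<open>i = length p - 1\<close> by simp
    qed
  qed
qed

lemma gdist_adj:
  assumes "is_walk E p" "hd p = r" "last p = x" "{x, y} \<in> E"
  shows "gdist E r y \<le> Suc (gdist E r x)"
proof -
  obtain q where q: "is_walk E q" "hd q = r" "last q = x" "length q = Suc (gdist E r x)"
    using gdist_ex[OF assms(1-3)] by blast
  have w: "is_walk E (q @ [y])" using is_walk_snoc[OF q(1)] q(3) assms(4) by simp
  have "hd (q @ [y]) = r" using q by (cases q) (auto simp: is_walk_def)
  then show ?thesis using gdist_le[OF w] q by simp
qed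

lemma gdist_neq:
  assumes "is_walk E p" "hd p = r" "last p = x" "{x, y} \<in> E" "x \<noteq> y"
    and "is_walk E p'" "hd p' = r" "last p' = y"
    and eq: "gdist E r x = gdist E r y"
  shows "has_cycle E"
proof -
  let ?n = "gdist E r x"
  obtain P where P: "is_walk E P" "hd P = r" "last P = x" "length P = Suc ?n"
    using gdist_ex[OF assms(1-3)] by blast
  obtain Q where Q: "is_walk E Q" "hd Q = r" "last Q = y" "length Q = Suc ?n"
    using gdist_ex[OF assms(6-8)] eq by metis
  have dP: "\<And>i. i < Suc ?n \<Longrightarrow> gdist E r (P ! i) = i"
    using gdist_prefix[OF P(1,2)] P by simp
  have dQ: "\<And>i. i < Suc ?n \<Longrightarrow> gdist E r (Q ! i) = i"
    using gdist_prefix[OF Q(1,2)] Q eq by simp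
  have Pne: "P \<noteq> []" and Qne: "Q \<noteq> []" using P Q by auto
  have P0: "P ! 0 = r" using P Pne by (simp add: hd_conv_nth)
  have Q0: "Q ! 0 = r" using Q Qne by (simp add: hd_conv_nth)
  have Pn: "P ! ?n = x" using P Pne by (simp add: last_conv_nth)
  have Qn: "Q ! ?n = y" using Q Qne by (simp add: last_conv_nth)
  define A where "A = {i. i \<le> ?n \<and> P ! i = Q ! i}"
  have finA: "finite A" unfolding A_def by simp
  have "0 \<in> A" unfolding A_def using P0 Q0 by simp
  define j where "j = Max A"
  have jA: "j \<in> A" unfolding j_def using finA \<open>0 \<in> A\<close> by (intro Max_in) auto
  have jmax: "\<And>i. i \<in> A \<Longrightarrow> i \<le> j" unfolding j_def using finA by simp
  have jn: "j < ?n" using jA Pn Qn assms(5) unfolding A_def by (cases "j = ?n") auto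
  have distP: "distinct P"
    unfolding distinct_conv_nth using dP P(4) by metis
  have distQ: "distinct Q"
    unfolding distinct_conv_nth using dQ Q(4) by metis
  define C where "C = drop j P @ rev (drop (Suc j) Q)"
  have lenC: "length C = (Suc ?n - j) + (?n - j)" unfolding C_def using P Q by simp
  have "length C \<ge> 3" using lenC jn by simp
  have disj: "set (drop j P) \<inter> set (drop (Suc j) Q) = {}"
  proof (rule ccontr)
    assume "set (drop j P) \<inter> set (drop (Suc j) Q) \<noteq> {}"
    then obtain z where z1: "z \<in> set (drop j P)" and z2: "z \<in> set (drop (Suc j) Q)" by blast
    obtain a where a: "a < length (drop j P)" "z = drop j P ! a" using z1 by (metis in_set_conv_nth)
    obtain b where b: "b < length (drop (Suc j) Q)" "z = drop (Suc j) Q ! b" using z2 by (metis in_set_conv_nth)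
    have za: "z = P ! (j + a)" "j + a < Suc ?n" using a P by auto
    have zb: "z = Q ! (Suc j + b)" "Suc j + b < Suc ?n" using b Q by auto
    have "j + a = Suc j + b" using dP[OF za(2)] dQ[OF zb(2)] za(1) zb(1) by simp
    then have "Suc j + b \<in> A" unfolding A_def using za zb by simp
    then show False using jmax by fastforce
  qed
  have distC: "distinct C" unfolding C_def using distP distQ disj by simp
  have w1: "is_walk E (drop j P)" using is_walk_drop[OF P(1)] jn P by simp
  have w2: "is_walk E (rev (drop (Suc j) Q))" using is_walk_rev[OF is_walk_drop[OF Q(1)]] jn Q by simp
  have lastP: "last (drop j P) = x" using P jn by (simp add: last_drop)
  have hdQ: "hd (rev (drop (Suc j) Q)) = y" using Q jn by (simp add: hd_rev last_drop)
  have wC: "is_walk E C" unfolding C_def using is_walk_append[OF w1 w2] lastP hdQ assms(4) by simp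
  have "hd C = P ! j" unfolding C_def using P jn by (simp add: hd_drop_conv_nth)
  moreover have "last C = Q ! Suc j" unfolding C_def using Q jn
    by (simp add: last_rev hd_drop_conv_nth)
  moreover have "{Q ! Suc j, Q ! j} \<in> E" using Q(1) Q(4) jn unfolding is_walk_def
    by (metis Suc_mono insert_commute2)
  moreover have "P ! j = Q ! j" using jA unfolding A_def by simp
  ultimately have "{last C, hd C} \<in> E" by simp
  then show ?thesis unfolding has_cycle_def using distC wC \<open>length C \<ge> 3\<close> by blast
qed

lemma simple_edge:
  assumes "simple_graph Vs E" "{x, y} \<in> E" shows "x \<noteq> y" "x \<in> Vs" "y \<in> Vs"
proof -
  obtain a b where "a \<noteq> b" "a \<in> Vs" "b \<in> Vs" "{x, y} = {a, b}"
    using assms unfolding simple_graph_def by blast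
  then show "x \<noteq> y" "x \<in> Vs" "y \<in> Vs" by (auto simp: doubleton_eq_iff)
qed

lemma tree_parity:
  assumes "is_tree Vs E" "r \<in> Vs" "{x, y} \<in> E"
  shows "even (gdist E r x) \<longleftrightarrow> odd (gdist E r y)"
proof -
  have sg: "simple_graph Vs E" using assms(1) by (simp add: is_tree_def)
  have xy: "x \<noteq> y" "x \<in> Vs" "y \<in> Vs" using simple_edge[OF sg assms(3)] by auto
  obtain p where p: "is_walk E p" "hd p = r" "last p = x"
    using assms(1,2) xy unfolding is_tree_def connected_graph_def by blast
  obtain q where q: "is_walk E q" "hd q = r" "last q = y"
    using assms(1,2) xy unfolding is_tree_def connected_graph_def by blast
  have e2: "{y, x} \<in> E" using assms(3) by (simp add: insert_commute)
  have "gdist E r y \<le> Suc (gdist E r x)" using gdist_adj[OF p assms(3)] .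
  moreover have "gdist E r x \<le> Suc (gdist E r y)" using gdist_adj[OF q e2] .
  moreover have "gdist E r x \<noteq> gdist E r y"
    using gdist_neq[OF p assms(3) xy(1) q] assms(1) by (auto simp: is_tree_def)
  ultimately have "gdist E r y = Suc (gdist E r x) \<or> gdist E r x = Suc (gdist E r y)" by linarith
  then show ?thesis by auto
qed

definition leaf :: "'a set set \<Rightarrow> 'a \<Rightarrow> 'a \<Rightarrow> bool" where
  "leaf E l u \<longleftrightarrow> {l, u} \<in> E \<and> (\<forall>e\<in>E. l \<in> e \<longrightarrow> e = {l, u})"

lemma cycle_from_segment:
  assumes "is_walk E p" "distinct p" "i + 2 \<le> j" "j < length p" "{p ! i, p ! j} \<in> E"
  shows "has_cycle E"
proof -
  define C where "C = take (Suc j - i) (drop i p)"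
  have len: "length C = Suc j - i" unfolding C_def using assms by simp
  have "is_walk E C" unfolding C_def using assms by (intro is_walk_take is_walk_drop) auto
  moreover have "distinct C" unfolding C_def using assms(2) by simp
  moreover have "hd C = p ! i" unfolding C_def using assms by (simp add: hd_conv_nth)
  moreover have "last C = p ! j"
  proof -
    have "C \<noteq> []" using len assms(3) by auto
    then have "last C = C ! (Suc j - i - 1)" using len by (simp add: last_conv_nth)
    also have "\<dots> = p ! j" unfolding C_def using assms by simp
    finally show ?thesis .
  qed
  ultimately show ?thesis unfolding has_cycle_def using len assms
    by (intro exI[of _ C]) (auto simp: insert_commute)
qed

lemma longest_path_structure:
  assumes sg: "simple_graph Vs E" and nc: "\<not> has_cycle E" and v0: "v0 \<in> Vs"
  shows "(\<forall>e\<in>E. v0 \<notin> e) \<or>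
    (\<exists>l u. l \<noteq> v0 \<and> leaf E l u \<and> (u = v0 \<or> (\<exists>w. w \<noteq> l \<and> {w, u} \<in> E \<and>
        (\<forall>y. {y, u} \<in> E \<longrightarrow> y = w \<or> y = l \<or> (y \<noteq> v0 \<and> leaf E y u)))))"
proof -
  have finV: "finite Vs" using sg by (simp add: simple_graph_def)
  define P where "P = {p. distinct p \<and> set p \<subseteq> Vs \<and> is_walk E p \<and> hd p = v0}"
  have "P \<subseteq> {xs. set xs \<subseteq> Vs \<and> length xs \<le> card Vs}"
  proof
    fix q assume "q \<in> P"
    then have "distinct q" "set q \<subseteq> Vs" unfolding P_def by auto
    then have "length q \<le> card Vs" using distinct_card[of q] card_mono[OF finV] by metis
    then show "q \<in> {xs. set xs \<subseteq> Vs \<and> length xs \<le> card Vs}" using \<open>set q \<subseteq> Vs\<close> by simp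
  qed
  then have finP: "finite P" using finite_lists_length_le[OF finV] finite_subset by blast
  have "[v0] \<in> P" unfolding P_def using v0 by (simp add: is_walk_def)
  define m where "m = Max (length ` P)"
  have "m \<in> length ` P" unfolding m_def using finP \<open>[v0] \<in> P\<close> by (intro Max_in) auto
  then obtain p where pP: "p \<in> P" and lp: "length p = m" by auto
  have maxP: "\<And>q. q \<in> P \<Longrightarrow> length q \<le> m" unfolding m_def using finP by simp
  have edge_vs: "\<And>a b. {a, b} \<in> E \<Longrightarrow> a \<noteq> b \<and> a \<in> Vs \<and> b \<in> Vs"
    using simple_edge[OF sg] by blast
  have edge_form: "\<And>e a. e \<in> E \<Longrightarrow> a \<in> e \<Longrightarrow> \<exists>b. e = {a, b}"
    using sg unfolding simple_graph_def by fastforce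
  have key: "\<And>q y. q \<in> P \<Longrightarrow> length q = m \<Longrightarrow> {last q, y} \<in> E \<Longrightarrow>
      length q \<ge> 2 \<and> y = q ! (length q - 2)"
  proof -
    fix q y assume qP: "q \<in> P" and lq: "length q = m" and e: "{last q, y} \<in> E"
    have qw: "is_walk E q" "distinct q" "set q \<subseteq> Vs" "hd q = v0" using qP unfolding P_def by auto
    have qne: "q \<noteq> []" using qw by (simp add: is_walk_def)
    have yin: "y \<in> set q"
    proof (rule ccontr)
      assume "y \<notin> set q"
      then have "q @ [y] \<in> P" unfolding P_def using qw e edge_vs[OF e] qne
        by (auto intro: is_walk_snoc)
      then show False using maxP lq by fastforce
    qed
    then obtain i where i: "i < length q" "y = q ! i" by (metis in_set_conv_nth)
    have lastq: "last q = q ! (length q - 1)" using qne by (simp add: last_conv_nth)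
    have "i \<noteq> length q - 1" using edge_vs[OF e] i lastq by auto
    moreover have "\<not> (i + 2 \<le> length q - 1)"
    proof
      assume "i + 2 \<le> length q - 1"
      moreover have "{q ! i, q ! (length q - 1)} \<in> E" using e i lastq by (simp add: insert_commute)
      ultimately show False using cycle_from_segment[OF qw(1,2), of i "length q - 1"] nc qne by simp
    qed
    ultimately have "i = length q - 2" using i by linarith
    moreover have "length q \<ge> 2" using \<open>i \<noteq> length q - 1\<close> i by linarith
    ultimately show "length q \<ge> 2 \<and> y = q ! (length q - 2)" using i by simp
  qed
  have keyleaf: "\<And>q. q \<in> P \<Longrightarrow> length q = m \<Longrightarrow> length q \<ge> 2 \<Longrightarrow> leaf E (last q) (q ! (length q - 2))"
  proof -
    fix q assume qP: "q \<in> P" and lq: "length q = m" and l2: "length q \<ge> 2"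
    have qw: "is_walk E q" using qP unfolding P_def by auto
    have "{q ! (length q - 2), q ! Suc (length q - 2)} \<in> E" using qw l2 unfolding is_walk_def by simp
    moreover have "Suc (length q - 2) = length q - 1" using l2 by simp
    moreover have "q \<noteq> []" using l2 by auto
    then have "last q = q ! (length q - 1)" by (simp add: last_conv_nth)
    ultimately have e: "{last q, q ! (length q - 2)} \<in> E" by (simp add: insert_commute)
    show "leaf E (last q) (q ! (length q - 2))" unfolding leaf_def
    proof (intro conjI ballI impI)
      show "{last q, q ! (length q - 2)} \<in> E" by (rule e)
      fix e' assume "e' \<in> E" "last q \<in> e'"
      then obtain b where "e' = {last q, b}" using edge_form by blast
      then show "e' = {last q, q ! (length q - 2)}" using key[OF qP lq] \<open>e' \<in> E\<close> by simp
    qed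
  qed
  have pw: "is_walk E p" "distinct p" "set p \<subseteq> Vs" "hd p = v0" using pP unfolding P_def by auto
  have pne: "p \<noteq> []" using pw by (simp add: is_walk_def)
  have p0: "p ! 0 = v0" using pw pne by (simp add: hd_conv_nth)
  have "length p \<noteq> 0" using pne by simp
  then consider "length p = 1" | "length p = 2" | "length p \<ge> 3" by linarith
  then show ?thesis
  proof cases
    case 1
    have "\<forall>e\<in>E. v0 \<notin> e"
    proof (intro ballI notI)
      fix e assume "e \<in> E" "v0 \<in> e"
      then obtain b where eb: "e = {v0, b}" using edge_form by blast
      have "last p = v0" using 1 pw pne by (simp add: last_conv_nth hd_conv_nth)
      then show False using key[OF pP lp, of b] \<open>e \<in> E\<close> eb 1 by simp
    qed
    then show ?thesis by simp
  next
    case 2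
    have "leaf E (last p) (p ! 0)" using keyleaf[OF pP lp] 2 by simp
    moreover have "last p \<noteq> v0"
    proof -
      have "last p = p ! 1" using 2 pne by (simp add: last_conv_nth)
      moreover have "p ! 1 \<noteq> p ! 0" using pw(2) 2 by (simp add: nth_eq_iff_index_eq)
      ultimately show ?thesis using p0 by simp
    qed
    ultimately show ?thesis using p0 by blast
  next
    case 3
    define n where "n = length p"
    define l where "l = last p"
    define u where "u = p ! (n - 2)"
    define w where "w = p ! (n - 3)"
    have lf: "leaf E l u" unfolding l_def u_def n_def using keyleaf[OF pP lp] 3 by simp
    have ln: "l = p ! (n - 1)" unfolding l_def n_def using pne by (simp add: last_conv_nth)
    have "p ! (n - 1) \<noteq> p ! 0" using pw(2) 3 unfolding n_def by (subst nth_eq_iff_index_eq) auto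
    then have lv0: "l \<noteq> v0" using p0 ln by simp
    have "p ! (n - 3) \<noteq> p ! (n - 1)" using pw(2) 3 unfolding n_def by (subst nth_eq_iff_index_eq) auto
    then have wl: "w \<noteq> l" using ln unfolding w_def by simp
    have n32: "Suc (n - 3) = n - 2" "Suc (n - 3) < length p" using 3 unfolding n_def by auto
    have wu: "{w, u} \<in> E" using pw(1) n32 unfolding is_walk_def w_def u_def by metis
    have rest: "\<forall>y. {y, u} \<in> E \<longrightarrow> y = w \<or> y = l \<or> (y \<noteq> v0 \<and> leaf E y u)"
    proof (intro allI impI)
      fix y assume yu: "{y, u} \<in> E"
      show "y = w \<or> y = l \<or> (y \<noteq> v0 \<and> leaf E y u)"
      proof (cases "y = w \<or> y = l")
        case True then show ?thesis by blast
      next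
        case False
        have ynot: "y \<notin> set p"
        proof
          assume "y \<in> set p"
          then obtain i where i: "i < n" "y = p ! i" unfolding n_def by (metis in_set_conv_nth)
          have "i \<noteq> n - 3" "i \<noteq> n - 1" using False i ln unfolding w_def by auto
          moreover have "i \<noteq> n - 2" using edge_vs[OF yu] i unfolding u_def by auto
          ultimately have "i + 2 \<le> n - 2" using i 3 unfolding n_def by linarith
          moreover have "n - 2 < length p" using 3 unfolding n_def by simp
          ultimately show False using cycle_from_segment[OF pw(1,2), of i "n - 2"] yu i nc
            unfolding u_def by simp
        qed
        define q where "q = take (n - 1) p @ [y]"
        have tk: "is_walk E (take (n - 1) p)" using is_walk_take[OF pw(1)] 3 unfolding n_def by simp
        have "take (n - 1) p = take (n - 2) p @ [p ! (n - 2)]"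
        proof -
          have "n - 1 = Suc (n - 2)" "n - 2 < length p" using 3 unfolding n_def by auto
          then show ?thesis using take_Suc_conv_app_nth by metis
        qed
        then have lt: "last (take (n - 1) p) = u" unfolding u_def by simp
        have qP: "q \<in> P" unfolding P_def q_def
        proof (intro CollectI conjI)
          show "distinct (take (n - 1) p @ [y])" using pw(2) ynot by (auto dest: in_set_takeD)
          show "set (take (n - 1) p @ [y]) \<subseteq> Vs" using pw(3) edge_vs[OF yu] by (auto dest: in_set_takeD)
          show "is_walk E (take (n - 1) p @ [y])" using is_walk_snoc[OF tk] lt yu by (simp add: insert_commute)
          have "take (n - 1) p \<noteq> []" using 3 pne unfolding n_def by simp
          then show "hd (take (n - 1) p @ [y]) = v0" using pw(4) 3 pne unfolding n_def by (simp add: hd_take)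
        qed
        have lq: "length q = m" unfolding q_def n_def using lp 3 by simp
        have "leaf E (last q) (q ! (length q - 2))" using keyleaf[OF qP lq] lq lp 3 by simp
        moreover have "last q = y" unfolding q_def by simp
        moreover have "q ! (length q - 2) = u" unfolding q_def u_def n_def using 3
          by (simp add: nth_append numeral_2_eq_2) linarith
        moreover have "y \<noteq> v0" using ynot pw(4) pne by auto
        ultimately show ?thesis by simp
      qed
    qed
    show ?thesis using lf lv0 wl wu rest by blast
  qed
qed

definition mats :: "'a set set \<Rightarrow> 'a set \<Rightarrow> 'a set set set" where
  "mats E S = {M. is_matching E M \<and> S \<subseteq> \<Union>M}"

definition wt :: "'a set \<Rightarrow> ('a \<Rightarrow> real) \<Rightarrow> 'a set set \<Rightarrow> real" where
  "wt J a M = (\<Prod>v\<in>J - \<Union>M. a v)"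

definition NNZ :: "'a set set \<Rightarrow> 'a set \<Rightarrow> 'a set \<Rightarrow> ('a \<Rightarrow> real) \<Rightarrow> 'a set \<Rightarrow> real" where
  "NNZ E S J a Z = (\<Sum>M\<in>{M \<in> mats E S. Z \<inter> \<Union>M = {}}. wt J a M)"

lemma finite_mats: "finite E \<Longrightarrow> finite (mats E S)"
  unfolding mats_def is_matching_def
  by (rule finite_subset[of _ "Pow E"]) auto

lemma matching_same:
  "is_matching E M \<Longrightarrow> e1 \<in> M \<Longrightarrow> e2 \<in> M \<Longrightarrow> x \<in> e1 \<Longrightarrow> x \<in> e2 \<Longrightarrow> e1 = e2"
  unfolding is_matching_def by blast

lemma leaf_matched:
  assumes "leaf E l u" "M \<subseteq> E" shows "l \<in> \<Union>M \<longleftrightarrow> {l, u} \<in> M"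
  using assms unfolding leaf_def by auto

lemma prod_pull:
  assumes "finite J" "v \<in> J" "v \<notin> X"
  shows "(\<Prod>y\<in>J - X. a y) = a v * (\<Prod>y\<in>(J - {v}) - X. a y)"
proof -
  have "J - X = insert v ((J - {v}) - X)" using assms by auto
  then show ?thesis using assms by (simp add: prod.insert_remove)
qed

lemma forced_leaf:
  assumes finE: "finite E" and lf: "leaf E l u" and lS: "l \<in> S"
    and lJ: "l \<notin> J" and uJ: "u \<notin> J" and Zlu: "l \<notin> Z" "u \<notin> Z"
  shows "NNZ E S J a Z = NNZ {e\<in>E. l \<notin> e \<and> u \<notin> e} (S - {l, u}) J a Z"
  unfolding NNZ_def
proof (rule sum.reindex_bij_witness[where j = "\<lambda>M. M - {{l, u}}" and i = "\<lambda>M. insert {l, u} M"])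
  let ?E' = "{e\<in>E. l \<notin> e \<and> u \<notin> e}"
  have lu: "{l, u} \<in> E" using lf by (simp add: leaf_def)
  fix M assume M: "M \<in> {M \<in> mats E S. Z \<inter> \<Union>M = {}}"
  then have mM: "is_matching E M" "S \<subseteq> \<Union>M" "Z \<inter> \<Union>M = {}" unfolding mats_def by auto
  have ME: "M \<subseteq> E" using mM(1) by (simp add: is_matching_def)
  have "l \<in> \<Union>M" using mM(2) lS by (rule subsetD)
  then have luM: "{l, u} \<in> M" using leaf_matched[OF lf ME] by simp
  have disj: "\<forall>e1\<in>M. \<forall>e2\<in>M. e1 \<noteq> e2 \<longrightarrow> e1 \<inter> e2 = {}" using mM(1) by (simp add: is_matching_def)
  show "insert {l, u} (M - {{l, u}}) = M" using luM by blast
  have other: "\<And>e. e \<in> M \<Longrightarrow> e \<noteq> {l, u} \<Longrightarrow> l \<notin> e \<and> u \<notin> e"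
  proof -
    fix e assume e: "e \<in> M" "e \<noteq> {l, u}"
    have "e \<inter> {l, u} = {}" using disj[rule_format, OF e(1) luM e(2)] .
    then show "l \<notin> e \<and> u \<notin> e" by blast
  qed
  show "M - {{l, u}} \<in> {M \<in> mats ?E' (S - {l, u}). Z \<inter> \<Union>M = {}}"
    unfolding mats_def is_matching_def
  proof (intro CollectI conjI)
    show "M - {{l, u}} \<subseteq> ?E'" using mM(1) other unfolding is_matching_def by blast
    show "\<forall>e1\<in>M - {{l, u}}. \<forall>e2\<in>M - {{l, u}}. e1 \<noteq> e2 \<longrightarrow> e1 \<inter> e2 = {}"
      using mM(1) unfolding is_matching_def by blast
    show "S - {l, u} \<subseteq> \<Union>(M - {{l, u}})" using mM(2) by blast
    show "Z \<inter> \<Union>(M - {{l, u}}) = {}" using mM(3) by blast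
  qed
  have "\<Union>M = \<Union>(M - {{l, u}}) \<union> {l, u}" using luM by blast
  then have "J - \<Union>M = J - \<Union>(M - {{l, u}})" using lJ uJ by blast
  then show "wt J a (M - {{l, u}}) = wt J a M" unfolding wt_def by simp
next
  let ?E' = "{e\<in>E. l \<notin> e \<and> u \<notin> e}"
  have lu: "{l, u} \<in> E" using lf by (simp add: leaf_def)
  fix M assume M: "M \<in> {M \<in> mats ?E' (S - {l, u}). Z \<inter> \<Union>M = {}}"
  then have mM: "is_matching ?E' M" "S - {l, u} \<subseteq> \<Union>M" "Z \<inter> \<Union>M = {}" unfolding mats_def by auto
  have nlu: "{l, u} \<notin> M" using mM(1) unfolding is_matching_def by blast
  show "insert {l, u} M - {{l, u}} = M" using nlu by blast
  show "insert {l, u} M \<in> {M \<in> mats E S. Z \<inter> \<Union>M = {}}"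
    unfolding mats_def is_matching_def
  proof (intro CollectI conjI)
    show "insert {l, u} M \<subseteq> E" using mM(1) lu unfolding is_matching_def by blast
    show "\<forall>e1\<in>insert {l, u} M. \<forall>e2\<in>insert {l, u} M. e1 \<noteq> e2 \<longrightarrow> e1 \<inter> e2 = {}"
      using mM(1) unfolding is_matching_def by blast
    show "S \<subseteq> \<Union>(insert {l, u} M)" using mM(2) by blast
    show "Z \<inter> \<Union>(insert {l, u} M) = {}" using mM(3) Zlu by blast
  qed
qed

lemma matching_disj: "is_matching E M \<Longrightarrow> e1 \<in> M \<Longrightarrow> e2 \<in> M \<Longrightarrow> e1 \<noteq> e2 \<Longrightarrow> e1 \<inter> e2 = {}"
  unfolding is_matching_def by blast

lemma matching_sub: "is_matching E M \<Longrightarrow> M' \<subseteq> M \<Longrightarrow> M' \<subseteq> E' \<Longrightarrow> is_matching E' M'"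
  unfolding is_matching_def by (meson subsetD)

lemma matching_insert:
  assumes "is_matching E M" "e \<in> E" "\<And>e'. e' \<in> M \<Longrightarrow> e' \<noteq> e \<Longrightarrow> e' \<inter> e = {}"
  shows "is_matching E (insert e M)"
  using assms unfolding is_matching_def by (metis Int_commute insert_iff insert_subset)

lemma matching_E: "is_matching E M \<Longrightarrow> M \<subseteq> E"
  unfolding is_matching_def by simp

lemma parallel_leaves:
  assumes finE: "finite E" and finJ: "finite J"
    and lf: "leaf E l u" and xf: "leaf E x u"
    and lx: "l \<noteq> x" and lu: "l \<noteq> u" and xu: "x \<noteq> u"
    and lJ: "l \<in> J" and xJ: "x \<in> J" and uJ: "u \<notin> J"
    and uS: "u \<in> S" and lS: "l \<notin> S" and xS: "x \<notin> S"
    and lZ: "l \<notin> Z" and xZ: "x \<notin> Z"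
    and apos: "a x + a l \<noteq> 0"
  shows "NNZ E S J a Z = (a x + a l) *
           NNZ {e\<in>E. l \<notin> e} S (J - {l}) (a(x := a x * a l / (a x + a l))) Z"
proof -
  define E' where "E' = {e\<in>E. l \<notin> e}"
  define J' where "J' = J - {l}"
  define a' where "a' = a(x := a x * a l / (a x + a l))"
  define A where "A = {M \<in> mats E S. Z \<inter> \<Union>M = {}}"
  define B where "B = {M \<in> mats E' S. Z \<inter> \<Union>M = {}}"
  define A1 where "A1 = {M \<in> A. {l, u} \<in> M}"
  define B2 where "B2 = {M \<in> B. {x, u} \<in> M}"
  define B3 where "B3 = {M \<in> B. {x, u} \<notin> M}"
  have luE: "{l, u} \<in> E" using lf by (simp add: leaf_def)
  have xuE: "{x, u} \<in> E" using xf by (simp add: leaf_def)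
  have finE': "finite E'" unfolding E'_def using finE by simp
  have finA: "finite A" unfolding A_def using finite_mats[OF finE] by simp
  have finB: "finite B" unfolding B_def using finite_mats[OF finE'] by simp
  have E'E: "E' \<subseteq> E" unfolding E'_def by blast
  have BA: "B \<subseteq> A"
  proof
    fix M assume "M \<in> B"
    then have m: "is_matching E' M" "S \<subseteq> \<Union>M" "Z \<inter> \<Union>M = {}" unfolding B_def mats_def by auto
    have "is_matching E M" using matching_sub[OF m(1) subset_refl] matching_E[OF m(1)] E'E by blast
    then show "M \<in> A" unfolding A_def mats_def using m by simp
  qed
  have AB: "A = A1 \<union> B"
  proof
    show "A1 \<union> B \<subseteq> A" using BA unfolding A1_def by blast
    show "A \<subseteq> A1 \<union> B"
    proof
      fix M assume MA: "M \<in> A"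
      then have m: "is_matching E M" "S \<subseteq> \<Union>M" "Z \<inter> \<Union>M = {}" unfolding A_def mats_def by auto
      show "M \<in> A1 \<union> B"
      proof (cases "{l, u} \<in> M")
        case True then show ?thesis using MA unfolding A1_def by blast
      next
        case False
        have "M \<subseteq> E'"
        proof
          fix e assume eM: "e \<in> M"
          then have eE: "e \<in> E" using matching_E[OF m(1)] by blast
          have "l \<notin> e" using lf False eM eE unfolding leaf_def by metis
          then show "e \<in> E'" unfolding E'_def using eE by simp
        qed
        then have "is_matching E' M" using matching_sub[OF m(1) subset_refl] by simp
        then show ?thesis unfolding B_def mats_def using m by simp
      qed
    qed
  qed
  have A1B: "A1 \<inter> B = {}"
  proof -
    have "\<And>M. M \<in> B \<Longrightarrow> {l, u} \<notin> M"
    proof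
      fix M assume "M \<in> B" "{l, u} \<in> M"
      then have "{l, u} \<in> E'" using matching_E unfolding B_def mats_def by blast
      then show False unfolding E'_def by simp
    qed
    then show ?thesis unfolding A1_def by blast
  qed
  have finA1: "finite A1" unfolding A1_def using finA by simp
  have sumA: "sum (wt J a) A = sum (wt J a) A1 + sum (wt J a) B"
    unfolding AB using sum.union_disjoint[OF finA1 finB A1B] .
  have wB: "\<And>M. M \<in> B \<Longrightarrow> wt J a M = (if {x, u} \<in> M then a l else a x + a l) * wt J' a' M"
  proof -
    fix M assume MB: "M \<in> B"
    then have m: "is_matching E' M" unfolding B_def mats_def by auto
    have ME': "M \<subseteq> E'" using matching_E[OF m] .
    have ME: "M \<subseteq> E" using ME' E'E by blast
    have lM: "l \<notin> \<Union>M" using ME' unfolding E'_def by blast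
    have w1: "wt J a M = a l * (\<Prod>v\<in>J' - \<Union>M. a v)"
      unfolding wt_def J'_def using prod_pull[OF finJ lJ lM] .
    show "wt J a M = (if {x, u} \<in> M then a l else a x + a l) * wt J' a' M"
    proof (cases "{x, u} \<in> M")
      case True
      then have "x \<in> \<Union>M" by blast
      then have "(\<Prod>v\<in>J' - \<Union>M. a v) = (\<Prod>v\<in>J' - \<Union>M. a' v)"
        unfolding a'_def by (intro prod.cong) auto
      then show ?thesis using w1 True unfolding wt_def by simp
    next
      case False
      then have xM: "x \<notin> \<Union>M" using leaf_matched[OF xf ME] by simp
      have finJ': "finite J'" unfolding J'_def using finJ by simp
      have xJ': "x \<in> J'" unfolding J'_def using xJ lx by simp
      have p1: "(\<Prod>v\<in>J' - \<Union>M. a v) = a x * (\<Prod>v\<in>(J' - {x}) - \<Union>M. a v)"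
        using prod_pull[OF finJ' xJ' xM] .
      have p2: "(\<Prod>v\<in>J' - \<Union>M. a' v) = a' x * (\<Prod>v\<in>(J' - {x}) - \<Union>M. a' v)"
        using prod_pull[OF finJ' xJ' xM] .
      have p3: "(\<Prod>v\<in>(J' - {x}) - \<Union>M. a' v) = (\<Prod>v\<in>(J' - {x}) - \<Union>M. a v)"
        unfolding a'_def by (intro prod.cong) auto
      have h: "(a x + a l) * a' x = a x * a l" using apos unfolding a'_def by simp
      define P where "P = (\<Prod>v\<in>(J' - {x}) - \<Union>M. a v)"
      have q1: "wt J a M = (a x * a l) * P" using w1 p1 unfolding P_def by simp
      have q2: "wt J' a' M = a' x * P" using p2 p3 unfolding P_def wt_def by simp
      have "wt J a M = ((a x + a l) * a' x) * P" using q1 h by simp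
      then show ?thesis using q2 False by simp

    qed
  qed
  have sumB: "sum (wt J a) B = sum (\<lambda>M. a l * wt J' a' M) B2 + sum (\<lambda>M. (a x + a l) * wt J' a' M) B3"
  proof -
    have "B = B2 \<union> B3" "B2 \<inter> B3 = {}" unfolding B2_def B3_def by blast+
    moreover have "finite B2" "finite B3" unfolding B2_def B3_def using finB by simp_all
    ultimately have "sum (wt J a) B = sum (wt J a) B2 + sum (wt J a) B3"
      by (simp add: sum.union_disjoint)
    moreover have "sum (wt J a) B2 = sum (\<lambda>M. a l * wt J' a' M) B2"
      by (rule sum.cong) (auto simp: B2_def wB)
    moreover have "sum (wt J a) B3 = sum (\<lambda>M. (a x + a l) * wt J' a' M) B3"
      by (rule sum.cong) (auto simp: B3_def wB)
    ultimately show ?thesis by simp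
  qed
  have sumA1: "sum (wt J a) A1 = sum (\<lambda>M. a x * wt J' a' M) B2"
  proof (rule sum.reindex_bij_witness[where j = "\<lambda>M. insert {x, u} (M - {{l, u}})"
        and i = "\<lambda>M. insert {l, u} (M - {{x, u}})"])
    fix M assume MA1: "M \<in> A1"
    then have m: "is_matching E M" "S \<subseteq> \<Union>M" "Z \<inter> \<Union>M = {}" "{l, u} \<in> M"
      unfolding A1_def A_def mats_def by auto
    have ME: "M \<subseteq> E" using matching_E[OF m(1)] .
    have oth: "\<And>e. e \<in> M \<Longrightarrow> e \<noteq> {l, u} \<Longrightarrow> e \<inter> {l, u} = {}"
      using matching_disj[OF m(1) _ m(4)] by blast
    have xuM: "{x, u} \<notin> M"
    proof
      assume "{x, u} \<in> M"
      moreover have "{x, u} \<noteq> {l, u}" using lx xu by (auto simp: doubleton_eq_iff)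
      ultimately show False using oth by blast
    qed
    have xM: "x \<notin> \<Union>M" using leaf_matched[OF xf ME] xuM by simp
    show "insert {l, u} (insert {x, u} (M - {{l, u}}) - {{x, u}}) = M"
      using xuM m(4) lx xu by (auto simp: doubleton_eq_iff)
    let ?N = "insert {x, u} (M - {{l, u}})"
    have NE': "?N \<subseteq> E'"
    proof
      fix e assume "e \<in> ?N"
      then consider "e = {x, u}" | "e \<in> M" "e \<noteq> {l, u}" by blast
      then show "e \<in> E'"
      proof cases
        case 1 then show ?thesis using xuE lx lu unfolding E'_def by simp
      next
        case 2 then show ?thesis using oth[OF 2] ME unfolding E'_def by blast
      qed
    qed
    have Nm: "is_matching E' ?N"
    proof (rule matching_insert)
      show "is_matching E' (M - {{l, u}})"
        by (rule matching_sub[OF m(1)]) (use NE' in blast)+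
      show "{x, u} \<in> E'" using NE' by blast
      fix e' assume "e' \<in> M - {{l, u}}" "e' \<noteq> {x, u}"
      then have "e' \<in> M" "e' \<inter> {l, u} = {}" using oth by auto
      then show "e' \<inter> {x, u} = {}" using xM by blast
    qed
    have NS: "S \<subseteq> \<Union>?N"
    proof
      fix s assume "s \<in> S"
      then obtain e where "e \<in> M" "s \<in> e" using m(2) by blast
      then show "s \<in> \<Union>?N" using lS \<open>s \<in> S\<close> by (cases "e = {l, u}") auto
    qed
    have "u \<in> \<Union>M" using m(4) by blast
    then have "\<Union>?N \<subseteq> \<Union>M \<union> {x}" by blast
    then have NZ: "Z \<inter> \<Union>?N = {}" using m(3) xZ by blast
    show "?N \<in> B2" unfolding B2_def B_def mats_def using Nm NS NZ by simp
    have "J - {x} - \<Union>M = J' - \<Union>?N"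
    proof -
      have "l \<in> \<Union>M" using m(4) by blast
      then show ?thesis unfolding J'_def using uJ by blast
    qed
    moreover have "\<And>v. v \<in> J' - \<Union>?N \<Longrightarrow> a' v = a v" unfolding a'_def by auto
    ultimately have "(\<Prod>v\<in>J' - \<Union>?N. a' v) = (\<Prod>v\<in>J - {x} - \<Union>M. a v)"
      by (metis (no_types, lifting) prod.cong)
    then have "a x * wt J' a' ?N = a x * (\<Prod>v\<in>J - {x} - \<Union>M. a v)" unfolding wt_def by simp
    also have "\<dots> = wt J a M" unfolding wt_def using prod_pull[OF finJ xJ xM, of a] by simp
    finally show "a x * wt J' a' ?N = wt J a M" .
  next
    fix M assume MB2: "M \<in> B2"
    then have m: "is_matching E' M" "S \<subseteq> \<Union>M" "Z \<inter> \<Union>M = {}" "{x, u} \<in> M"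
      unfolding B2_def B_def mats_def by auto
    have ME': "M \<subseteq> E'" using matching_E[OF m(1)] .
    have luM: "{l, u} \<notin> M" using ME' unfolding E'_def by blast
    have lM: "l \<notin> \<Union>M" using ME' unfolding E'_def by blast
    have oth: "\<And>e. e \<in> M \<Longrightarrow> e \<noteq> {x, u} \<Longrightarrow> e \<inter> {x, u} = {}"
      using matching_disj[OF m(1) _ m(4)] by blast
    show "insert {x, u} (insert {l, u} (M - {{x, u}}) - {{l, u}}) = M"
      using luM m(4) lx lu by (auto simp: doubleton_eq_iff)
    let ?N = "insert {l, u} (M - {{x, u}})"
    have Nm: "is_matching E ?N"
    proof (rule matching_insert)
      show "is_matching E (M - {{x, u}})"
        by (rule matching_sub[OF m(1)]) (use ME' E'E in blast)+
      show "{l, u} \<in> E" by (rule luE)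
      fix e' assume "e' \<in> M - {{x, u}}" "e' \<noteq> {l, u}"
      then have "e' \<in> M" "e' \<inter> {x, u} = {}" using oth by auto
      then show "e' \<inter> {l, u} = {}" using lM by blast
    qed
    have NS: "S \<subseteq> \<Union>?N"
    proof
      fix s assume "s \<in> S"
      then obtain e where "e \<in> M" "s \<in> e" using m(2) by blast
      then show "s \<in> \<Union>?N" using xS \<open>s \<in> S\<close> by (cases "e = {x, u}") auto
    qed
    have "u \<in> \<Union>M" using m(4) by blast
    then have "\<Union>?N \<subseteq> \<Union>M \<union> {l}" by blast
    then have NZ: "Z \<inter> \<Union>?N = {}" using m(3) lZ by blast
    show "?N \<in> A1" unfolding A1_def A_def mats_def using Nm NS NZ by simp
  qed
  have "sum (wt J a) A = (a x + a l) * sum (wt J' a') B"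
  proof -
    have "B = B2 \<union> B3" "B2 \<inter> B3 = {}" unfolding B2_def B3_def by blast+
    moreover have "finite B2" "finite B3" unfolding B2_def B3_def using finB by simp_all
    ultimately have "sum (wt J' a') B = sum (wt J' a') B2 + sum (wt J' a') B3"
      by (simp add: sum.union_disjoint)
    then show ?thesis using sumA sumB sumA1
      by (simp add: sum_distrib_left algebra_simps sum.distrib[symmetric])
  qed
  then show ?thesis unfolding NNZ_def A_def B_def E'_def J'_def a'_def by simp
qed

lemma series_leaf:
  fixes a :: "'a \<Rightarrow> real"
  assumes finE: "finite E" and finJ: "finite J"
    and lf: "leaf E l u" and wuE: "{w, u} \<in> E"
    and ue: "\<forall>e\<in>E. u \<in> e \<longrightarrow> e = {w, u} \<or> e = {l, u}"
    and wl: "w \<noteq> l" and lu: "l \<noteq> u" and wu: "w \<noteq> u"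
    and lJ: "l \<in> J" and uJ: "u \<notin> J" and uS: "u \<in> S" and lS: "l \<notin> S"
    and wS: "w \<in> S \<longleftrightarrow> w \<notin> J"
    and lZ: "l \<notin> Z" and uZ: "u \<notin> Z"
  defines "E' \<equiv> {e\<in>E. l \<notin> e \<and> u \<notin> e}" and "S' \<equiv> S - {u, w}"
    and "J' \<equiv> insert w (J - {l})" and "a' \<equiv> a(w := (if w \<in> J then a w else 0) + a l)"
  shows "(w \<notin> Z \<longrightarrow> NNZ E S J a Z = NNZ E' S' J' a' Z) \<and>
         (w \<in> Z \<longrightarrow> w \<in> J \<longrightarrow> a' w * NNZ E S J a Z = a w * NNZ E' S' J' a' Z)"
proof -
  define A where "A = {M \<in> mats E S. Z \<inter> \<Union>M = {}}"
  define B where "B = {M \<in> mats E' S'. Z \<inter> \<Union>M = {}}"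
  define A1 where "A1 = {M \<in> A. {l, u} \<in> M}"
  define A2 where "A2 = {M \<in> A. {w, u} \<in> M}"
  define C where "C = {M \<in> B. w \<in> S \<longrightarrow> w \<in> \<Union>M}"
  define D where "D = {M \<in> B. w \<notin> \<Union>M \<and> w \<notin> Z}"
  define B1 where "B1 = {M \<in> B. w \<in> \<Union>M}"
  define B2 where "B2 = {M \<in> B. w \<notin> \<Union>M}"
  define R where "R = (\<lambda>M. \<Prod>v\<in>J - {l, w} - \<Union>M. a v)"
  define f where "f = (\<lambda>M. \<Prod>v\<in>J - {l} - \<Union>M. a v)"
  have luE: "{l, u} \<in> E" using lf by (simp add: leaf_def)
  have finE': "finite E'" unfolding E'_def using finE by simp
  have finA: "finite A" unfolding A_def using finite_mats[OF finE] by simp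
  have finB: "finite B" unfolding B_def using finite_mats[OF finE'] by simp
  have E'E: "E' \<subseteq> E" unfolding E'_def by blast
  have neq: "{w, u} \<noteq> {l, u}" using wl wu by (auto simp: doubleton_eq_iff)
  have AA: "A = A1 \<union> A2"
  proof
    show "A1 \<union> A2 \<subseteq> A" unfolding A1_def A2_def by blast
    show "A \<subseteq> A1 \<union> A2"
    proof
      fix M assume MA: "M \<in> A"
      then have m: "is_matching E M" "S \<subseteq> \<Union>M" unfolding A_def mats_def by auto
      obtain e where e: "e \<in> M" "u \<in> e" using m(2) uS by blast
      have "e \<in> E" using matching_E[OF m(1)] e by blast
      then have "e = {w, u} \<or> e = {l, u}" using ue e by blast
      then show "M \<in> A1 \<union> A2" using MA e unfolding A1_def A2_def by blast
    qed
  qed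
  have AAd: "A1 \<inter> A2 = {}"
  proof -
    have "\<And>M. M \<in> A \<Longrightarrow> {l, u} \<in> M \<Longrightarrow> {w, u} \<in> M \<Longrightarrow> False"
    proof -
      fix M assume "M \<in> A" "{l, u} \<in> M" "{w, u} \<in> M"
      then have "{l, u} \<inter> {w, u} = {}" using matching_disj[of E M "{l, u}" "{w, u}"] neq
        unfolding A_def mats_def by auto
      then show False by blast
    qed
    then show ?thesis unfolding A1_def A2_def by blast
  qed
  have finA1: "finite A1" "finite A2" unfolding A1_def A2_def using finA by simp_all
  have sumA: "sum (wt J a) A = sum (wt J a) A1 + sum (wt J a) A2"
    unfolding AA using sum.union_disjoint[OF finA1 AAd] .
  have sumA1: "sum (wt J a) A1 = sum f C"
  proof (rule sum.reindex_bij_witness[where j = "\<lambda>M. M - {{l, u}}" and i = "\<lambda>M. insert {l, u} M"])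
    fix M assume MA1: "M \<in> A1"
    then have m: "is_matching E M" "S \<subseteq> \<Union>M" "Z \<inter> \<Union>M = {}" "{l, u} \<in> M"
      unfolding A1_def A_def mats_def by auto
    have ME: "M \<subseteq> E" using matching_E[OF m(1)] .
    have oth: "\<And>e. e \<in> M \<Longrightarrow> e \<noteq> {l, u} \<Longrightarrow> e \<inter> {l, u} = {}"
      using matching_disj[OF m(1) _ m(4)] by blast
    show "insert {l, u} (M - {{l, u}}) = M" using m(4) by blast
    let ?N = "M - {{l, u}}"
    have NE': "?N \<subseteq> E'" using oth ME unfolding E'_def by blast
    have Nm: "is_matching E' ?N" by (rule matching_sub[OF m(1)]) (use NE' in blast)+
    have NS: "S' \<subseteq> \<Union>?N"
    proof
      fix s assume sS': "s \<in> S'"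
      then have "s \<in> S" "s \<noteq> u" "s \<noteq> l" unfolding S'_def using lS by auto
      then obtain e where "e \<in> M" "s \<in> e" using m(2) by blast
      moreover have "e \<noteq> {l, u}" using \<open>s \<in> e\<close> \<open>s \<noteq> u\<close> \<open>s \<noteq> l\<close> by blast
      ultimately show "s \<in> \<Union>?N" by blast
    qed
    have Nw: "w \<in> S \<longrightarrow> w \<in> \<Union>?N"
    proof
      assume "w \<in> S"
      then obtain e where "e \<in> M" "w \<in> e" using m(2) by blast
      moreover have "e \<noteq> {l, u}" using \<open>w \<in> e\<close> wl wu by blast
      ultimately show "w \<in> \<Union>?N" by blast
    qed
    have NZ: "Z \<inter> \<Union>?N = {}" using m(3) by blast
    show "?N \<in> C" unfolding C_def B_def mats_def using Nm NS NZ Nw by simp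
    have "\<Union>M = \<Union>?N \<union> {l, u}" using m(4) by blast
    then have "J - \<Union>M = J - {l} - \<Union>?N" using uJ by blast
    then show "f ?N = wt J a M" unfolding f_def wt_def by simp
  next
    fix M assume MC: "M \<in> C"
    then have m: "is_matching E' M" "S' \<subseteq> \<Union>M" "Z \<inter> \<Union>M = {}" "w \<in> S \<longrightarrow> w \<in> \<Union>M"
      unfolding C_def B_def mats_def by auto
    have ME': "M \<subseteq> E'" using matching_E[OF m(1)] .
    have luM: "{l, u} \<notin> M" using ME' unfolding E'_def by blast
    have luM2: "l \<notin> \<Union>M" "u \<notin> \<Union>M" using ME' unfolding E'_def by blast+
    show "insert {l, u} M - {{l, u}} = M" using luM by blast
    let ?N = "insert {l, u} M"
    have Nm: "is_matching E ?N"
    proof (rule matching_insert)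
      show "is_matching E M" by (rule matching_sub[OF m(1)]) (use ME' E'E in blast)+
      show "{l, u} \<in> E" by (rule luE)
      fix e' assume "e' \<in> M" "e' \<noteq> {l, u}"
      then show "e' \<inter> {l, u} = {}" using luM2 by blast
    qed
    have NS: "S \<subseteq> \<Union>?N"
    proof
      fix s assume "s \<in> S"
      then have "s = u \<or> s = w \<or> s \<in> S'" unfolding S'_def by blast
      then show "s \<in> \<Union>?N" using m(2,4) \<open>s \<in> S\<close> by blast
    qed
    have NZ: "Z \<inter> \<Union>?N = {}" using m(3) lZ uZ by blast
    show "?N \<in> A1" unfolding A1_def A_def mats_def using Nm NS NZ by simp
  qed
  have sumA2: "sum (wt J a) A2 = sum (\<lambda>M. a l * R M) D"
  proof (rule sum.reindex_bij_witness[where j = "\<lambda>M. M - {{w, u}}" and i = "\<lambda>M. insert {w, u} M"])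
    fix M assume MA2: "M \<in> A2"
    then have m: "is_matching E M" "S \<subseteq> \<Union>M" "Z \<inter> \<Union>M = {}" "{w, u} \<in> M"
      unfolding A2_def A_def mats_def by auto
    have ME: "M \<subseteq> E" using matching_E[OF m(1)] .
    have oth: "\<And>e. e \<in> M \<Longrightarrow> e \<noteq> {w, u} \<Longrightarrow> e \<inter> {w, u} = {}"
      using matching_disj[OF m(1) _ m(4)] by blast
    show "insert {w, u} (M - {{w, u}}) = M" using m(4) by blast
    let ?N = "M - {{w, u}}"
    have lN: "\<And>e. e \<in> ?N \<Longrightarrow> l \<notin> e"
    proof
      fix e assume "e \<in> ?N" "l \<in> e"
      then have "e = {l, u}" using lf ME unfolding leaf_def by blast
      then show False using oth \<open>e \<in> ?N\<close> by blast
    qed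
    have NE': "?N \<subseteq> E'" using oth ME lN unfolding E'_def by blast
    have Nm: "is_matching E' ?N" by (rule matching_sub[OF m(1)]) (use NE' in blast)+
    have NS: "S' \<subseteq> \<Union>?N"
    proof
      fix s assume sS': "s \<in> S'"
      then have "s \<in> S" "s \<noteq> u" "s \<noteq> w" unfolding S'_def by auto
      then obtain e where "e \<in> M" "s \<in> e" using m(2) by blast
      moreover have "e \<noteq> {w, u}" using \<open>s \<in> e\<close> \<open>s \<noteq> u\<close> \<open>s \<noteq> w\<close> by blast
      ultimately show "s \<in> \<Union>?N" by blast
    qed
    have Nw: "w \<notin> \<Union>?N" using oth by blast
    have wZ: "w \<notin> Z" using m(3,4) by blast
    have NZ: "Z \<inter> \<Union>?N = {}" using m(3) by blast
    show "?N \<in> D" unfolding D_def B_def mats_def using Nm NS NZ Nw wZ by simp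
    have lNN: "l \<notin> \<Union>?N" using lN by blast
    have "\<Union>M = \<Union>?N \<union> {w, u}" using m(4) by blast
    then have "J - \<Union>M = (J - {w}) - \<Union>?N" using uJ by blast
    moreover have "l \<in> J - {w}" using lJ wl by simp
    ultimately have "wt J a M = a l * (\<Prod>v\<in>(J - {w}) - {l} - \<Union>?N. a v)"
      unfolding wt_def using prod_pull[of "J - {w}" l "\<Union>?N" a] finJ lNN by simp
    moreover have "(J - {w}) - {l} - \<Union>?N = J - {l, w} - \<Union>?N" by blast
    ultimately show "a l * R ?N = wt J a M" unfolding R_def by simp
  next
    fix M assume MD: "M \<in> D"
    then have m: "is_matching E' M" "S' \<subseteq> \<Union>M" "Z \<inter> \<Union>M = {}" "w \<notin> \<Union>M" "w \<notin> Z"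
      unfolding D_def B_def mats_def by auto
    have ME': "M \<subseteq> E'" using matching_E[OF m(1)] .
    have wuM: "{w, u} \<notin> M" using m(4) by blast
    have uM: "u \<notin> \<Union>M" using ME' unfolding E'_def by blast
    show "insert {w, u} M - {{w, u}} = M" using wuM by blast
    let ?N = "insert {w, u} M"
    have Nm: "is_matching E ?N"
    proof (rule matching_insert)
      show "is_matching E M" by (rule matching_sub[OF m(1)]) (use ME' E'E in blast)+
      show "{w, u} \<in> E" by (rule wuE)
      fix e' assume "e' \<in> M" "e' \<noteq> {w, u}"
      then show "e' \<inter> {w, u} = {}" using uM m(4) by blast
    qed
    have NS: "S \<subseteq> \<Union>?N"
    proof
      fix s assume "s \<in> S"
      then have "s = u \<or> s = w \<or> s \<in> S'" unfolding S'_def by blast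
      then show "s \<in> \<Union>?N" using m(2) by blast
    qed
    have NZ: "Z \<inter> \<Union>?N = {}" using m(3,5) uZ by blast
    show "?N \<in> A2" unfolding A2_def A_def mats_def using Nm NS NZ by simp
  qed
  have wB1: "\<And>M. M \<in> B \<Longrightarrow> w \<in> \<Union>M \<Longrightarrow> wt J' a' M = f M"
  proof -
    fix M assume "M \<in> B" "w \<in> \<Union>M"
    then have "J' - \<Union>M = J - {l} - \<Union>M" unfolding J'_def by blast
    moreover have "\<And>v. v \<in> J - {l} - \<Union>M \<Longrightarrow> a' v = a v" using \<open>w \<in> \<Union>M\<close> unfolding a'_def by auto
    ultimately show "wt J' a' M = f M" unfolding wt_def f_def by (metis (no_types, lifting) prod.cong)
  qed
  have wB2: "\<And>M. M \<in> B \<Longrightarrow> w \<notin> \<Union>M \<Longrightarrow> wt J' a' M = a' w * R M"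
  proof -
    fix M assume "M \<in> B" "w \<notin> \<Union>M"
    have finJ': "finite J'" unfolding J'_def using finJ by simp
    have "wt J' a' M = a' w * (\<Prod>v\<in>J' - {w} - \<Union>M. a' v)"
      unfolding wt_def using prod_pull[OF finJ' _ \<open>w \<notin> \<Union>M\<close>] unfolding J'_def by simp
    moreover have "J' - {w} - \<Union>M = J - {l, w} - \<Union>M" unfolding J'_def by blast
    moreover have "\<And>v. v \<in> J - {l, w} - \<Union>M \<Longrightarrow> a' v = a v" unfolding a'_def by auto
    ultimately show "wt J' a' M = a' w * R M" unfolding R_def
      by (metis (no_types, lifting) prod.cong)
  qed
  have fB2: "\<And>M. M \<in> B \<Longrightarrow> w \<notin> \<Union>M \<Longrightarrow> w \<in> J \<Longrightarrow> f M = a w * R M"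
  proof -
    fix M assume "M \<in> B" "w \<notin> \<Union>M" "w \<in> J"
    have "w \<in> J - {l}" using \<open>w \<in> J\<close> wl by simp
    then have "f M = a w * (\<Prod>v\<in>J - {l} - {w} - \<Union>M. a v)"
      unfolding f_def using prod_pull[of "J - {l}" w "\<Union>M" a] finJ \<open>w \<notin> \<Union>M\<close> by simp
    moreover have "J - {l} - {w} - \<Union>M = J - {l, w} - \<Union>M" by blast
    ultimately show "f M = a w * R M" unfolding R_def by simp
  qed
  have BB: "B = B1 \<union> B2" "B1 \<inter> B2 = {}" unfolding B1_def B2_def by blast+
  have finB12: "finite B1" "finite B2" unfolding B1_def B2_def using finB by simp_all
  have sumB: "sum (wt J' a') B = sum f B1 + sum (\<lambda>M. a' w * R M) B2"
  proof -
    have "sum (wt J' a') B = sum (wt J' a') B1 + sum (wt J' a') B2"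
      unfolding BB(1) using sum.union_disjoint[OF finB12 BB(2)] .
    moreover have "sum (wt J' a') B1 = sum f B1"
    proof (rule sum.cong[OF refl])
      fix M assume "M \<in> B1" then show "wt J' a' M = f M" using wB1 unfolding B1_def by simp
    qed
    moreover have "sum (wt J' a') B2 = sum (\<lambda>M. a' w * R M) B2"
    proof (rule sum.cong[OF refl])
      fix M assume "M \<in> B2" then show "wt J' a' M = a' w * R M" using wB2 unfolding B2_def by simp
    qed
    ultimately show ?thesis by simp
  qed
  show ?thesis
  proof (intro conjI impI)
    assume wZ: "w \<notin> Z"
    have DB2: "D = B2" unfolding D_def B2_def using wZ by simp
    have sumC: "sum f C = sum f B1 + (if w \<in> J then sum (\<lambda>M. a w * R M) B2 else 0)"
    proof (cases "w \<in> J")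
      case True
      then have "C = B" unfolding C_def using wS by auto
      then have "sum f C = sum f B1 + sum f B2" using BB finB12 by (simp add: sum.union_disjoint)
      moreover have "sum f B2 = sum (\<lambda>M. a w * R M) B2"
      proof (rule sum.cong[OF refl])
        fix M assume "M \<in> B2" then show "f M = a w * R M" using fB2 True unfolding B2_def by simp
      qed
      ultimately show ?thesis using True by simp
    next
      case False
      then have "C = B1" unfolding C_def B1_def using wS by auto
      then show ?thesis using False by simp
    qed
    have "sum (wt J a) A = sum (wt J' a') B"
      using sumA sumA1 sumA2 sumC sumB DB2 unfolding a'_def
      by (simp add: sum_distrib_left[symmetric] distrib_right sum.distrib)
    then show "NNZ E S J a Z = NNZ E' S' J' a' Z" unfolding NNZ_def A_def B_def by simp
  next
    assume wZ: "w \<in> Z" and wJ: "w \<in> J"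
    have De: "D = {}" unfolding D_def using wZ by simp
    have "\<And>M. M \<in> B \<Longrightarrow> w \<notin> \<Union>M"
    proof -
      fix M assume "M \<in> B" then have "Z \<inter> \<Union>M = {}" unfolding B_def by simp
      then show "w \<notin> \<Union>M" using wZ by blast
    qed
    then have B2B: "B2 = B" unfolding B2_def by blast
    have CB: "C = B" unfolding C_def using wS wJ by simp
    have sfB: "sum f B = sum (\<lambda>M. a w * R M) B"
    proof (rule sum.cong[OF refl])
      fix M assume "M \<in> B" then show "f M = a w * R M" using fB2 wJ \<open>M \<in> B \<Longrightarrow> w \<notin> \<Union>M\<close> by simp
    qed
    have B1e: "B1 = {}" using B2B BB by blast
    have "sum (wt J a) A = sum (\<lambda>M. a w * R M) B"
      using sumA sumA1 sumA2 De CB sfB by simp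
    moreover have "sum (wt J' a') B = sum (\<lambda>M. a' w * R M) B"
      using sumB B1e B2B by simp
    ultimately have "sum (wt J a) A = sum (\<lambda>M. a w * R M) B"
      "sum (wt J' a') B = sum (\<lambda>M. a' w * R M) B" by simp_all
    then show "a' w * NNZ E S J a Z = a w * NNZ E' S' J' a' Z"
      unfolding NNZ_def A_def[symmetric] B_def[symmetric]
      by (simp add: sum_distrib_left mult.left_commute)
  qed
qed

definition hyps :: "('a \<Rightarrow> 'a \<Rightarrow> real) \<Rightarrow> 'a set \<Rightarrow> 'a set set \<Rightarrow> 'a set \<Rightarrow> 'a set \<Rightarrow> 'a set \<Rightarrow> 'a set
    \<Rightarrow> ('a \<Rightarrow> real) \<Rightarrow> 'a \<Rightarrow> bool" where
  "hyps D Vs E V U K J a v0 \<longleftrightarrow> simple_graph Vs E \<and> \<not> has_cycle E \<and> V \<union> U = Vs \<and> V \<inter> U = {} \<and>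
     (\<forall>e\<in>E. \<exists>v\<in>V. \<exists>u\<in>U. e = {v, u}) \<and> (\<forall>u\<in>U. 2 \<le> degree E u) \<and>
     K \<union> J = V \<and> K \<inter> J = {} \<and> v0 \<in> J \<and> (\<forall>v\<in>J. 0 < a v) \<and>
     (\<forall>v\<in>V. \<forall>u\<in>U. if {v, u} \<in> E then D v u = 1 \<or> D v u = -1 else D v u = 0) \<and>
     0 < NNZ E (K \<union> U) J a {}"

definition concl :: "('a \<Rightarrow> 'a \<Rightarrow> real) \<Rightarrow> 'a set set \<Rightarrow> 'a set \<Rightarrow> 'a set \<Rightarrow> 'a set \<Rightarrow> 'a set
    \<Rightarrow> ('a \<Rightarrow> real) \<Rightarrow> 'a \<Rightarrow> bool" where
  "concl D E V U K J a v0 \<longleftrightarrow> (\<exists>\<phi>. (\<forall>u\<in>U. (\<Sum>v\<in>V. \<phi> v * D v u) = 0) \<and> \<phi> v0 = 1 \<and>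
     (\<Sum>v\<in>J. a v * (\<phi> v)\<^sup>2) = a v0 * NNZ E (K \<union> U) J a {} / NNZ E (K \<union> U) J a {v0})"

lemma walk_mono: "is_walk E' p \<Longrightarrow> E' \<subseteq> E \<Longrightarrow> is_walk E p"
  unfolding is_walk_def by blast

lemma nocycle_mono:
  assumes "\<not> has_cycle E" "E' \<subseteq> E" shows "\<not> has_cycle E'"
proof
  assume "has_cycle E'"
  then obtain p where "length p \<ge> 3" "distinct p" "is_walk E' p" "{last p, hd p} \<in> E'"
    unfolding has_cycle_def by blast
  then have "length p \<ge> 3 \<and> distinct p \<and> is_walk E p \<and> {last p, hd p} \<in> E"
    using walk_mono assms(2) by blast
  then show False using assms(1) unfolding has_cycle_def by blast
qed

lemma simple_sub:
  assumes "simple_graph Vs E" shows "simple_graph (Vs - X) {e\<in>E. e \<inter> X = {}}"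
  unfolding simple_graph_def
proof (intro conjI ballI)
  show "finite (Vs - X)" using assms by (simp add: simple_graph_def)
  fix e assume e: "e \<in> {e\<in>E. e \<inter> X = {}}"
  have "\<forall>e\<in>E. \<exists>x y. x \<noteq> y \<and> x \<in> Vs \<and> y \<in> Vs \<and> e = {x, y}"
    using assms by (simp add: simple_graph_def)
  moreover have "e \<in> E" using e by simp
  ultimately obtain x y where "x \<noteq> y" "x \<in> Vs" "y \<in> Vs" "e = {x, y}" by blast
  moreover have "x \<notin> X" "y \<notin> X" using e \<open>e = {x, y}\<close> by auto
  ultimately show "\<exists>x y. x \<noteq> y \<and> x \<in> Vs - X \<and> y \<in> Vs - X \<and> e = {x, y}" by blast
qed

lemma simple_E_pow:
  assumes "simple_graph Vs E" shows "E \<subseteq> Pow Vs"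
proof
  fix e assume "e \<in> E"
  moreover have "\<forall>e\<in>E. \<exists>x y. x \<noteq> y \<and> x \<in> Vs \<and> y \<in> Vs \<and> e = {x, y}"
    using assms by (simp add: simple_graph_def)
  ultimately obtain x y where "x \<in> Vs" "y \<in> Vs" "e = {x, y}" by blast
  then show "e \<in> Pow Vs" by simp
qed

lemma hypsD:
  assumes "hyps D Vs E V U K J a v0"
  shows "simple_graph Vs E" "\<not> has_cycle E" "V \<union> U = Vs" "V \<inter> U = {}"
    "\<forall>e\<in>E. \<exists>v\<in>V. \<exists>u\<in>U. e = {v, u}" "\<forall>u\<in>U. 2 \<le> degree E u"
    "K \<union> J = V" "K \<inter> J = {}" "v0 \<in> J" "\<forall>v\<in>J. 0 < a v"
    "\<forall>v\<in>V. \<forall>u\<in>U. if {v, u} \<in> E then D v u = 1 \<or> D v u = -1 else D v u = 0"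
    "0 < NNZ E (K \<union> U) J a {}"
  using assms unfolding hyps_def by simp_all

lemma hyps_basic:
  assumes "hyps D Vs E V U K J a v0"
  shows "finite Vs" "finite E" "finite V" "finite U" "finite J" "finite K"
    "\<And>x y. {x, y} \<in> E \<Longrightarrow> x \<in> V \<Longrightarrow> y \<in> U"
    "\<And>x y. {x, y} \<in> E \<Longrightarrow> x \<in> U \<Longrightarrow> y \<in> V"
    "\<And>x y. {x, y} \<in> E \<Longrightarrow> x \<in> V \<or> x \<in> U"
proof -
  have sg: "simple_graph Vs E" and VU: "V \<union> U = Vs" "V \<inter> U = {}" and KJ: "K \<union> J = V"
    and bip: "\<forall>e\<in>E. \<exists>v\<in>V. \<exists>u\<in>U. e = {v, u}"
    using hypsD[OF assms] by auto
  show fV: "finite Vs" using sg by (simp add: simple_graph_def)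
  have "E \<subseteq> Pow Vs" using simple_E_pow[OF sg] .
  then show "finite E" using fV finite_subset by blast
  show "finite V" "finite U" using fV VU by auto
  then show "finite J" "finite K" using KJ by auto
  show "\<And>x y. {x, y} \<in> E \<Longrightarrow> x \<in> V \<Longrightarrow> y \<in> U"
  proof -
    fix x y assume "{x, y} \<in> E" "x \<in> V"
    then obtain v u where "v \<in> V" "u \<in> U" "{x, y} = {v, u}" using bip by blast
    then show "y \<in> U" using \<open>x \<in> V\<close> VU by (auto simp: doubleton_eq_iff)
  qed
  show "\<And>x y. {x, y} \<in> E \<Longrightarrow> x \<in> U \<Longrightarrow> y \<in> V"
  proof -
    fix x y assume "{x, y} \<in> E" "x \<in> U"
    then obtain v u where "v \<in> V" "u \<in> U" "{x, y} = {v, u}" using bip by blast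
    then show "y \<in> V" using \<open>x \<in> U\<close> VU by (auto simp: doubleton_eq_iff)
  qed
  show "\<And>x y. {x, y} \<in> E \<Longrightarrow> x \<in> V \<or> x \<in> U"
  proof -
    fix x y assume "{x, y} \<in> E"
    then obtain v u where "v \<in> V" "u \<in> U" "{x, y} = {v, u}" using bip by blast
    then show "x \<in> V \<or> x \<in> U" by (auto simp: doubleton_eq_iff)
  qed
qed

lemma degree_same:
  assumes "\<And>e. e \<in> E \<Longrightarrow> u \<in> e \<Longrightarrow> P e"
  shows "degree {e\<in>E. P e} u = degree E u"
proof -
  have "{e\<in>{e\<in>E. P e}. u \<in> e} = {e\<in>E. u \<in> e}" using assms by auto
  then show ?thesis unfolding degree_def by simp
qed

lemma D_sq: "D v u = 1 \<or> D v u = -1 \<Longrightarrow> D v u * D v u = (1::real)"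
  by auto

lemma case_kleaf:
  assumes H: "hyps D Vs E V U K J a v0"
    and lf: "leaf E l u" and lK: "l \<in> K"
    and IH: "\<And>Vs' E' V' U' K' J' a' v0'. card Vs' < card Vs \<Longrightarrow>
       hyps D Vs' E' V' U' K' J' a' v0' \<Longrightarrow> concl D E' V' U' K' J' a' v0'"
  shows "concl D E V U K J a v0"
proof -
  note hd = hypsD[OF H] and hb = hyps_basic[OF H]
  have luE: "{l, u} \<in> E" using lf by (simp add: leaf_def)
  have lV: "l \<in> V" using lK hd(7) by blast
  have uU: "u \<in> U" using hb(7)[OF luE lV] .
  have lU: "l \<notin> U" and uV: "u \<notin> V" using lV uU hd(4) by blast+
  have lJ: "l \<notin> J" using lK hd(8) by blast
  have uJ: "u \<notin> J" using uV hd(7) by blast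
  have uK: "u \<notin> K" using uV hd(7) by blast
  have v0l: "v0 \<noteq> l" using hd(9) lJ by blast
  have v0u: "v0 \<noteq> u" using hd(9) uJ by blast
  have lVs: "l \<in> Vs" using lV hd(3) by blast
  define E' where "E' = {e\<in>E. l \<notin> e \<and> u \<notin> e}"
  define Vs' where "Vs' = Vs - {l, u}"
  define V' where "V' = V - {l}"
  define U' where "U' = U - {u}"
  define K' where "K' = K - {l}"
  have E'alt: "E' = {e\<in>E. e \<inter> {l, u} = {}}" unfolding E'_def by blast
  have E'E: "E' \<subseteq> E" unfolding E'_def by blast
  have S': "K \<union> U - {l, u} = K' \<union> U'" unfolding K'_def U'_def using lU uK by blast
  have NN: "\<And>Z. l \<notin> Z \<Longrightarrow> u \<notin> Z \<Longrightarrow> NNZ E (K \<union> U) J a Z = NNZ E' (K' \<union> U') J a Z"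
    unfolding E'_def using forced_leaf[OF hb(2) lf _ lJ uJ] lK S' by simp
  have hyps': "hyps D Vs' E' V' U' K' J a v0"
    unfolding hyps_def
  proof (intro conjI)
    show "simple_graph Vs' E'" unfolding Vs'_def E'alt by (rule simple_sub[OF hd(1)])
    show "\<not> has_cycle E'" using nocycle_mono[OF hd(2) E'E] .
    show "V' \<union> U' = Vs'" unfolding V'_def U'_def Vs'_def using hd(3) lU uV by blast
    show "V' \<inter> U' = {}" unfolding V'_def U'_def using hd(4) by blast
    show "\<forall>e\<in>E'. \<exists>v\<in>V'. \<exists>u\<in>U'. e = {v, u}"
    proof
      fix e assume "e \<in> E'"
      then have "e \<in> E" "l \<notin> e" "u \<notin> e" unfolding E'_def by auto
      then obtain v u0 where "v \<in> V" "u0 \<in> U" "e = {v, u0}" using hd(5) by blast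
      then show "\<exists>v\<in>V'. \<exists>u\<in>U'. e = {v, u}" unfolding V'_def U'_def using \<open>l \<notin> e\<close> \<open>u \<notin> e\<close> by blast
    qed
    show "\<forall>u'\<in>U'. 2 \<le> degree E' u'"
    proof
      fix u' assume "u' \<in> U'"
      then have u'U: "u' \<in> U" "u' \<noteq> u" unfolding U'_def by auto
      have "degree E' u' = degree E u'"
        unfolding E'_def
      proof (rule degree_same)
        fix e assume eE: "e \<in> E" and ue: "u' \<in> e"
        have "l \<notin> e"
        proof
          assume "l \<in> e"
          then have "e = {l, u}" using lf eE unfolding leaf_def by blast
          then show False using ue u'U lU by auto
        qed
        moreover have "u \<notin> e"
        proof
          assume "u \<in> e"
          obtain v u0 where "v \<in> V" "u0 \<in> U" "e = {v, u0}" using hd(5) eE by blast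
          then show False using \<open>u \<in> e\<close> ue u'U uU hd(4) by auto
        qed
        ultimately show "l \<notin> e \<and> u \<notin> e" by simp
      qed
      then show "2 \<le> degree E' u'" using hd(6) u'U by simp
    qed
    show "K' \<union> J = V'" unfolding K'_def V'_def using hd(7) lJ by blast
    show "K' \<inter> J = {}" unfolding K'_def using hd(8) by blast
    show "v0 \<in> J" by (rule hd(9))
    show "\<forall>v\<in>J. 0 < a v" by (rule hd(10))
    show "\<forall>v\<in>V'. \<forall>u'\<in>U'. if {v, u'} \<in> E' then D v u' = 1 \<or> D v u' = -1 else D v u' = 0"
    proof (intro ballI)
      fix v u' assume "v \<in> V'" "u' \<in> U'"
      then have "v \<in> V" "u' \<in> U" "v \<noteq> l" "u' \<noteq> u" unfolding V'_def U'_def by auto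
      moreover have "v \<noteq> u" "u' \<noteq> l" using \<open>v \<in> V\<close> \<open>u' \<in> U\<close> uV lU by auto
      ultimately have "{v, u'} \<in> E' \<longleftrightarrow> {v, u'} \<in> E" unfolding E'_def by auto
      then show "if {v, u'} \<in> E' then D v u' = 1 \<or> D v u' = -1 else D v u' = 0"
        using hd(11) \<open>v \<in> V\<close> \<open>u' \<in> U\<close> by simp
    qed
    show "0 < NNZ E' (K' \<union> U') J a {}" using NN[of "{}"] hd(12) by simp
  qed
  have "Vs' \<subset> Vs" using lVs unfolding Vs'_def by blast
  then have "card Vs' < card Vs" using psubset_card_mono[OF hb(1)] by blast
  then have "concl D E' V' U' K' J a v0" using IH hyps' by blast
  then obtain \<phi>' where ph: "\<forall>u\<in>U'. (\<Sum>v\<in>V'. \<phi>' v * D v u) = 0" "\<phi>' v0 = 1"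
    "(\<Sum>v\<in>J. a v * (\<phi>' v)\<^sup>2) = a v0 * NNZ E' (K' \<union> U') J a {} / NNZ E' (K' \<union> U') J a {v0}"
    unfolding concl_def by blast
  define \<phi> where "\<phi> = \<phi>'(l := - D l u * (\<Sum>v\<in>V'. \<phi>' v * D v u))"
  have Dlu: "D l u * D l u = 1" using hd(11) lV uU luE by (intro D_sq) simp
  have sumV: "\<And>u'. (\<Sum>v\<in>V. \<phi> v * D v u') = \<phi> l * D l u' + (\<Sum>v\<in>V'. \<phi>' v * D v u')"
  proof -
    fix u'
    have "(\<Sum>v\<in>V. \<phi> v * D v u') = \<phi> l * D l u' + (\<Sum>v\<in>V'. \<phi> v * D v u')"
      unfolding V'_def using sum.remove[OF hb(3) lV] by blast
    moreover have "(\<Sum>v\<in>V'. \<phi> v * D v u') = (\<Sum>v\<in>V'. \<phi>' v * D v u')"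
      unfolding \<phi>_def V'_def by (intro sum.cong) auto
    ultimately show "(\<Sum>v\<in>V. \<phi> v * D v u') = \<phi> l * D l u' + (\<Sum>v\<in>V'. \<phi>' v * D v u')" by simp
  qed
  show ?thesis unfolding concl_def
  proof (intro exI conjI ballI)
    fix u' assume u'U: "u' \<in> U"
    show "(\<Sum>v\<in>V. \<phi> v * D v u') = 0"
    proof (cases "u' = u")
      case True
      have "\<phi> l * D l u = - (D l u * D l u) * (\<Sum>v\<in>V'. \<phi>' v * D v u)" unfolding \<phi>_def by simp
      then show ?thesis using sumV[of u] Dlu True by simp
    next
      case False
      have "{l, u'} \<notin> E"
      proof
        assume "{l, u'} \<in> E"
        moreover have lfa: "\<And>e. e \<in> E \<Longrightarrow> l \<in> e \<Longrightarrow> e = {l, u}" using lf by (simp add: leaf_def)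
        ultimately have eq: "{l, u'} = {l, u}" by simp
        have "u' \<in> {l, u}" using eq[symmetric] by simp
        moreover have "u' \<noteq> l" using u'U lU by blast
        ultimately show False using False by simp
      qed
      then have "D l u' = 0" using hd(11) lV u'U by auto
      moreover have "u' \<in> U'" unfolding U'_def using u'U False by simp
      ultimately show ?thesis using sumV[of u'] ph(1) by simp
    qed
  next
    show "\<phi> v0 = 1" unfolding \<phi>_def using ph(2) v0l by simp
  next
    have "(\<Sum>v\<in>J. a v * (\<phi> v)\<^sup>2) = (\<Sum>v\<in>J. a v * (\<phi>' v)\<^sup>2)"
      unfolding \<phi>_def using lJ by (intro sum.cong) auto
    also have "\<dots> = a v0 * NNZ E (K \<union> U) J a {} / NNZ E (K \<union> U) J a {v0}"
      using ph(3) NN[of "{}"] NN[of "{v0}"] v0l v0u by simp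
    finally show "(\<Sum>v\<in>J. a v * (\<phi> v)\<^sup>2) = a v0 * NNZ E (K \<union> U) J a {} / NNZ E (K \<union> U) J a {v0}" .
  qed
qed

lemma leaf_other:
  assumes "leaf E l u" "{l, y} \<in> E" shows "y = u \<or> y = l"
proof -
  have lfa: "\<And>e. e \<in> E \<Longrightarrow> l \<in> e \<Longrightarrow> e = {l, u}" using assms(1) by (simp add: leaf_def)
  have eq: "{l, y} = {l, u}" using lfa[OF assms(2)] by simp
  have "y \<in> {l, u}" using eq[symmetric] by simp
  then show ?thesis by blast
qed

lemma card2:
  assumes "finite A" "p \<in> A" "q \<in> A" "p \<noteq> q" shows "2 \<le> card A"
proof -
  have "{p, q} \<subseteq> A" using assms by blast
  then have "card {p, q} \<le> card A" using card_mono[OF assms(1)] by blast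
  then show ?thesis using assms(4) by simp
qed

lemma case_parallel:
  assumes H: "hyps D Vs E V U K J a v0"
    and lf: "leaf E l u" and xf: "leaf E x u" and lx: "l \<noteq> x" and lJ: "l \<in> J" and xJ: "x \<in> J"
    and lv0: "l \<noteq> v0" and xv0: "x \<noteq> v0" and wuE: "{w, u} \<in> E" and wx: "w \<noteq> x" and wl: "w \<noteq> l"
    and IH: "\<And>Vs' E' V' U' K' J' a' v0'. card Vs' < card Vs \<Longrightarrow>
       hyps D Vs' E' V' U' K' J' a' v0' \<Longrightarrow> concl D E' V' U' K' J' a' v0'"
  shows "concl D E V U K J a v0"
proof -
  note hd = hypsD[OF H] and hb = hyps_basic[OF H]
  have luE: "{l, u} \<in> E" using lf by (simp add: leaf_def)
  have xuE: "{x, u} \<in> E" using xf by (simp add: leaf_def)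
  have lV: "l \<in> V" and xV: "x \<in> V" using lJ xJ hd(7) by blast+
  have uU: "u \<in> U" using hb(7)[OF luE lV] .
  have lU: "l \<notin> U" and xU: "x \<notin> U" and uV: "u \<notin> V" using lV xV uU hd(4) by blast+
  have uJ: "u \<notin> J" using uV hd(7) by blast
  have lK: "l \<notin> K" and xK: "x \<notin> K" using lJ xJ hd(8) by blast+
  have lu: "l \<noteq> u" and xu: "x \<noteq> u" using lU xU uU by blast+
  have lVs: "l \<in> Vs" using lV hd(3) by blast
  have al: "0 < a l" and ax: "0 < a x" using hd(10) lJ xJ by auto
  define s where "s = a x + a l"
  have sp: "0 < s" unfolding s_def using al ax by simp
  define E' where "E' = {e\<in>E. l \<notin> e}"
  define Vs' where "Vs' = Vs - {l}"
  define V' where "V' = V - {l}"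
  define J' where "J' = J - {l}"
  define a' where "a' = a(x := a x * a l / (a x + a l))"
  have E'alt: "E' = {e\<in>E. e \<inter> {l} = {}}" unfolding E'_def by blast
  have E'E: "E' \<subseteq> E" unfolding E'_def by blast
  have NN: "\<And>Z. l \<notin> Z \<Longrightarrow> x \<notin> Z \<Longrightarrow> NNZ E (K \<union> U) J a Z = s * NNZ E' (K \<union> U) J' a' Z"
    unfolding E'_def J'_def a'_def s_def
    using parallel_leaves[OF hb(2) hb(5) lf xf lx lu xu lJ xJ uJ _ _ _ _ _, of "K \<union> U"] uU lK lU xK xU sp
    unfolding s_def by simp
  have hyps': "hyps D Vs' E' V' U K J' a' v0"
    unfolding hyps_def
  proof (intro conjI)
    show "simple_graph Vs' E'" unfolding Vs'_def E'alt by (rule simple_sub[OF hd(1)])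
    show "\<not> has_cycle E'" using nocycle_mono[OF hd(2) E'E] .
    show "V' \<union> U = Vs'" unfolding V'_def Vs'_def using hd(3) lU by blast
    show "V' \<inter> U = {}" unfolding V'_def using hd(4) by blast
    show "\<forall>e\<in>E'. \<exists>v\<in>V'. \<exists>u\<in>U. e = {v, u}"
    proof
      fix e assume "e \<in> E'"
      then have "e \<in> E" "l \<notin> e" unfolding E'_def by auto
      then obtain v u0 where "v \<in> V" "u0 \<in> U" "e = {v, u0}" using hd(5) by blast
      then show "\<exists>v\<in>V'. \<exists>u\<in>U. e = {v, u}" unfolding V'_def using \<open>l \<notin> e\<close> by blast
    qed
    show "\<forall>u'\<in>U. 2 \<le> degree E' u'"
    proof
      fix u' assume u'U: "u' \<in> U"
      show "2 \<le> degree E' u'"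
      proof (cases "u' = u")
        case True
        have finE': "finite {e\<in>E'. u \<in> e}" using hb(2) unfolding E'_def by simp
        have "{w, u} \<in> {e\<in>E'. u \<in> e}" "{x, u} \<in> {e\<in>E'. u \<in> e}"
          unfolding E'_def using wuE xuE wl lx lu by auto
        moreover have "{w, u} \<noteq> {x, u}" using wx by (auto simp: doubleton_eq_iff)
        ultimately show ?thesis unfolding degree_def True using card2[OF finE'] by blast
      next
        case False
        have "degree E' u' = degree E u'"
          unfolding E'_def
        proof (rule degree_same)
          fix e assume eE: "e \<in> E" and ue: "u' \<in> e"
          show "l \<notin> e"
          proof
            assume "l \<in> e"
            have lfa: "\<And>e. e \<in> E \<Longrightarrow> l \<in> e \<Longrightarrow> e = {l, u}" using lf by (simp add: leaf_def)
            have "e = {l, u}" using lfa[OF eE \<open>l \<in> e\<close>] .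
            then show False using ue False u'U lU by auto
          qed
        qed
        then show ?thesis using hd(6) u'U by simp
      qed
    qed
    show "K \<union> J' = V'" unfolding J'_def V'_def using hd(7) lK by blast
    show "K \<inter> J' = {}" unfolding J'_def using hd(8) by blast
    show "v0 \<in> J'" unfolding J'_def using hd(9) lv0 by simp
    show "\<forall>v\<in>J'. 0 < a' v"
    proof
      fix v assume "v \<in> J'"
      then show "0 < a' v" unfolding a'_def J'_def using hd(10) al ax by auto
    qed
    show "\<forall>v\<in>V'. \<forall>u'\<in>U. if {v, u'} \<in> E' then D v u' = 1 \<or> D v u' = -1 else D v u' = 0"
    proof (intro ballI)
      fix v u' assume "v \<in> V'" "u' \<in> U"
      then have "v \<in> V" "v \<noteq> l" unfolding V'_def by auto
      moreover have "u' \<noteq> l" using \<open>u' \<in> U\<close> lU by auto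
      ultimately have "{v, u'} \<in> E' \<longleftrightarrow> {v, u'} \<in> E" unfolding E'_def by auto
      then show "if {v, u'} \<in> E' then D v u' = 1 \<or> D v u' = -1 else D v u' = 0"
        using hd(11) \<open>v \<in> V\<close> \<open>u' \<in> U\<close> by simp
    qed
    show "0 < NNZ E' (K \<union> U) J' a' {}" using NN[of "{}"] hd(12) sp
      by (simp add: zero_less_mult_iff)
  qed
  have "Vs' \<subset> Vs" using lVs unfolding Vs'_def by blast
  then have "card Vs' < card Vs" using psubset_card_mono[OF hb(1)] by blast
  then have "concl D E' V' U K J' a' v0" using IH hyps' by blast
  then obtain \<phi>' where ph: "\<forall>u\<in>U. (\<Sum>v\<in>V'. \<phi>' v * D v u) = 0" "\<phi>' v0 = 1"
    "(\<Sum>v\<in>J'. a' v * (\<phi>' v)\<^sup>2) = a' v0 * NNZ E' (K \<union> U) J' a' {} / NNZ E' (K \<union> U) J' a' {v0}"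
    unfolding concl_def by blast
  define \<phi> where "\<phi> = \<phi>'(x := \<phi>' x * a l / s, l := D l u * D x u * \<phi>' x * a x / s)"
  have Dlu: "D l u * D l u = 1" using hd(11) lV uU luE by (intro D_sq) simp
  have Dxu: "D x u * D x u = 1" using hd(11) xV uU xuE by (intro D_sq) simp
  have xV': "x \<in> V'" unfolding V'_def using xV lx by simp
  have finV': "finite V'" unfolding V'_def using hb(3) by simp
  have sumV: "\<And>u'. (\<Sum>v\<in>V. \<phi> v * D v u') = \<phi> l * D l u' + (\<phi> x - \<phi>' x) * D x u' + (\<Sum>v\<in>V'. \<phi>' v * D v u')"
  proof -
    fix u'
    have "(\<Sum>v\<in>V. \<phi> v * D v u') = \<phi> l * D l u' + (\<Sum>v\<in>V'. \<phi> v * D v u')"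
      unfolding V'_def using sum.remove[OF hb(3) lV] by blast
    moreover have "(\<Sum>v\<in>V'. \<phi> v * D v u') = \<phi> x * D x u' + (\<Sum>v\<in>V' - {x}. \<phi> v * D v u')"
      using sum.remove[OF finV' xV'] by blast
    moreover have "(\<Sum>v\<in>V'. \<phi>' v * D v u') = \<phi>' x * D x u' + (\<Sum>v\<in>V' - {x}. \<phi>' v * D v u')"
      using sum.remove[OF finV' xV'] by blast
    moreover have "(\<Sum>v\<in>V' - {x}. \<phi> v * D v u') = (\<Sum>v\<in>V' - {x}. \<phi>' v * D v u')"
      unfolding \<phi>_def V'_def by (intro sum.cong) auto
    ultimately show "(\<Sum>v\<in>V. \<phi> v * D v u') = \<phi> l * D l u' + (\<phi> x - \<phi>' x) * D x u' + (\<Sum>v\<in>V'. \<phi>' v * D v u')"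
      by (simp add: algebra_simps)
  qed
  have phl: "\<phi> l = D l u * D x u * \<phi>' x * a x / s" unfolding \<phi>_def by simp
  have phx: "\<phi> x = \<phi>' x * a l / s" unfolding \<phi>_def using lx by simp
  show ?thesis unfolding concl_def
  proof (intro exI conjI ballI)
    fix u' assume u'U: "u' \<in> U"
    show "(\<Sum>v\<in>V. \<phi> v * D v u') = 0"
    proof (cases "u' = u")
      case True
      have "\<phi> l * D l u + (\<phi> x - \<phi>' x) * D x u
          = (D l u * D l u) * D x u * \<phi>' x * a x / s + (\<phi>' x * a l / s - \<phi>' x) * D x u"
        using phl phx by (simp add: algebra_simps)
      also have "\<dots> = D x u * \<phi>' x * ((a x + a l) / s - 1)" using Dlu sp by (simp add: field_simps)
      also have "\<dots> = 0" using sp unfolding s_def by simp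
      finally show ?thesis using sumV[of u] ph(1) uU True by simp
    next
      case False
      have "D l u' = 0"
      proof -
        have "{l, u'} \<notin> E" using leaf_other[OF lf] False u'U lU by blast
        then show ?thesis using hd(11) lV u'U by auto
      qed
      moreover have "D x u' = 0"
      proof -
        have "{x, u'} \<notin> E" using leaf_other[OF xf] False u'U xU by blast
        then show ?thesis using hd(11) xV u'U by auto
      qed
      ultimately show ?thesis using sumV[of u'] ph(1) u'U by simp
    qed
  next
    show "\<phi> v0 = 1" unfolding \<phi>_def using ph(2) lv0 xv0 by simp
  next
    have finJ': "finite J'" unfolding J'_def using hb(5) by simp
    have xJ': "x \<in> J'" unfolding J'_def using xJ lx by simp
    have rest: "(\<Sum>v\<in>J' - {x}. a v * (\<phi> v)\<^sup>2) = (\<Sum>v\<in>J' - {x}. a' v * (\<phi>' v)\<^sup>2)"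
      unfolding \<phi>_def a'_def J'_def by (intro sum.cong) auto
    have s1: "(\<Sum>v\<in>J. a v * (\<phi> v)\<^sup>2) = a l * (\<phi> l)\<^sup>2 + a x * (\<phi> x)\<^sup>2 + (\<Sum>v\<in>J' - {x}. a v * (\<phi> v)\<^sup>2)"
      using sum.remove[OF hb(5) lJ, of "\<lambda>v. a v * (\<phi> v)\<^sup>2"] sum.remove[OF finJ' xJ', of "\<lambda>v. a v * (\<phi> v)\<^sup>2"] unfolding J'_def by simp
    have s2: "(\<Sum>v\<in>J'. a' v * (\<phi>' v)\<^sup>2) = a' x * (\<phi>' x)\<^sup>2 + (\<Sum>v\<in>J' - {x}. a' v * (\<phi>' v)\<^sup>2)"
      using sum.remove[OF finJ' xJ', of "\<lambda>v. a' v * (\<phi>' v)\<^sup>2"] by simp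
    have key: "a l * (\<phi> l)\<^sup>2 + a x * (\<phi> x)\<^sup>2 = a' x * (\<phi>' x)\<^sup>2"
    proof -
      have "(\<phi> l)\<^sup>2 = (D l u * D l u) * (D x u * D x u) * (\<phi>' x * a x / s)\<^sup>2"
        using phl by (simp add: power2_eq_square algebra_simps)
      then have e1: "(\<phi> l)\<^sup>2 = (\<phi>' x * a x / s)\<^sup>2" using Dlu Dxu by simp
      have "a l * (\<phi>' x * a x / s)\<^sup>2 + a x * (\<phi>' x * a l / s)\<^sup>2 = (\<phi>' x)\<^sup>2 * (a x * a l) * (a x + a l) / (s * s)"
        using sp by (simp add: power2_eq_square field_simps)
      also have "\<dots> = ((\<phi>' x)\<^sup>2 * (a x * a l)) * s / (s * s)" unfolding s_def by simp
      also have "\<dots> = (\<phi>' x)\<^sup>2 * (a x * a l / s)" using sp by (simp add: field_simps)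
      finally show ?thesis using e1 phx unfolding a'_def s_def by simp
    qed
    have "(\<Sum>v\<in>J. a v * (\<phi> v)\<^sup>2) = (\<Sum>v\<in>J'. a' v * (\<phi>' v)\<^sup>2)"
      using s1 s2 rest key by simp
    also have "\<dots> = a' v0 * NNZ E' (K \<union> U) J' a' {} / NNZ E' (K \<union> U) J' a' {v0}" by (rule ph(3))
    also have "\<dots> = a v0 * (s * NNZ E' (K \<union> U) J' a' {}) / (s * NNZ E' (K \<union> U) J' a' {v0})"
      using sp xv0 unfolding a'_def by simp
    also have "\<dots> = a v0 * NNZ E (K \<union> U) J a {} / NNZ E (K \<union> U) J a {v0}"
      using NN[of "{}"] NN[of "{v0}"] lv0 xv0 by simp
    finally show "(\<Sum>v\<in>J. a v * (\<phi> v)\<^sup>2) = a v0 * NNZ E (K \<union> U) J a {} / NNZ E (K \<union> U) J a {v0}" .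
  qed
qed

lemma ratio_lemma:
  fixes p q X Y N :: real
  assumes "0 < p" "0 < q" "q * X = p * Y"
  shows "p * N / X = q * N / Y"
proof (cases "Y = 0")
  case True
  then have "X = 0" using assms by simp
  then show ?thesis using True by simp
next
  case False
  have "X \<noteq> 0"
  proof
    assume "X = 0" then have "p * Y = 0" using assms(3) by simp
    then show False using assms(1) False by simp
  qed
  moreover have "p * N * Y = q * N * X" using assms(3) by (simp add: algebra_simps)
  ultimately show ?thesis using False by (simp add: frac_eq_eq)
qed

lemma edge_form: "simple_graph Vs E \<Longrightarrow> e \<in> E \<Longrightarrow> z \<in> e \<Longrightarrow> \<exists>y. e = {z, y}"
proof -
  assume "simple_graph Vs E" "e \<in> E" "z \<in> e"
  moreover have "\<forall>e\<in>E. \<exists>x y. x \<noteq> y \<and> x \<in> Vs \<and> y \<in> Vs \<and> e = {x, y}"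
    using \<open>simple_graph Vs E\<close> by (simp add: simple_graph_def)
  ultimately obtain x y where "e = {x, y}" by blast
  then show "\<exists>y. e = {z, y}" using \<open>z \<in> e\<close> by (auto simp: insert_commute)
qed

lemma case_series:
  assumes H: "hyps D Vs E V U K J a v0"
    and lf: "leaf E l u" and lJ: "l \<in> J" and lv0: "l \<noteq> v0"
    and wuE: "{w, u} \<in> E" and wl: "w \<noteq> l"
    and only: "\<forall>y. {y, u} \<in> E \<longrightarrow> y = w \<or> y = l"
    and IH: "\<And>Vs' E' V' U' K' J' a' v0'. card Vs' < card Vs \<Longrightarrow>
       hyps D Vs' E' V' U' K' J' a' v0' \<Longrightarrow> concl D E' V' U' K' J' a' v0'"
  shows "concl D E V U K J a v0"
proof -
  note hd = hypsD[OF H] and hb = hyps_basic[OF H]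
  have luE: "{l, u} \<in> E" using lf by (simp add: leaf_def)
  have lV: "l \<in> V" using lJ hd(7) by blast
  have uU: "u \<in> U" using hb(7)[OF luE lV] .
  have uwE: "{u, w} \<in> E" using wuE by (simp add: insert_commute)
  have wV: "w \<in> V" using hb(8)[OF uwE uU] .
  have lU: "l \<notin> U" and uV: "u \<notin> V" and wU: "w \<notin> U" using lV uU wV hd(4) by blast+
  have uJ: "u \<notin> J" and uK: "u \<notin> K" using uV hd(7) by blast+
  have lK: "l \<notin> K" using lJ hd(8) by blast
  have lu: "l \<noteq> u" and wu: "w \<noteq> u" using lU uU wU by blast+
  have v0u: "v0 \<noteq> u" using hd(9) uJ by blast
  have lVs: "l \<in> Vs" using lV hd(3) by blast
  have al: "0 < a l" using hd(10) lJ by auto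
  have ue: "\<forall>e\<in>E. u \<in> e \<longrightarrow> e = {w, u} \<or> e = {l, u}"
  proof (intro ballI impI)
    fix e assume "e \<in> E" "u \<in> e"
    then obtain y where ey: "e = {u, y}" using edge_form[OF hd(1)] by blast
    then have "{y, u} \<in> E" using \<open>e \<in> E\<close> by (simp add: insert_commute)
    then have "y = w \<or> y = l" using only by blast
    then show "e = {w, u} \<or> e = {l, u}" using ey by (auto simp: insert_commute)
  qed
  define E' where "E' = {e\<in>E. l \<notin> e \<and> u \<notin> e}"
  define Vs' where "Vs' = Vs - {l, u}"
  define V' where "V' = V - {l}"
  define U' where "U' = U - {u}"
  define K' where "K' = K - {w}"
  define J' where "J' = insert w (J - {l})"
  define a' where "a' = a(w := (if w \<in> J then a w else 0) + a l)"
  have E'alt: "E' = {e\<in>E. e \<inter> {l, u} = {}}" unfolding E'_def by blast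
  have E'E: "E' \<subseteq> E" unfolding E'_def by blast
  have S': "K \<union> U - {u, w} = K' \<union> U'" unfolding K'_def U'_def using wU uK by blast
  have wS: "w \<in> K \<union> U \<longleftrightarrow> w \<notin> J" using wV wU hd(7) hd(8) by blast
  have SL: "\<And>Z. l \<notin> Z \<Longrightarrow> u \<notin> Z \<Longrightarrow>
      (w \<notin> Z \<longrightarrow> NNZ E (K \<union> U) J a Z = NNZ E' (K' \<union> U') J' a' Z) \<and>
      (w \<in> Z \<longrightarrow> w \<in> J \<longrightarrow> a' w * NNZ E (K \<union> U) J a Z = a w * NNZ E' (K' \<union> U') J' a' Z)"
  proof -
    fix Z :: "'a set" assume "l \<notin> Z" "u \<notin> Z"
    have "u \<in> K \<union> U" "l \<notin> K \<union> U" using uU lK lU by auto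
    then show "?thesis Z"
      using series_leaf[OF hb(2) hb(5) lf wuE ue wl lu wu lJ uJ _ _ wS \<open>l \<notin> Z\<close> \<open>u \<notin> Z\<close>, of a]
      unfolding E'_def[symmetric] J'_def[symmetric] a'_def[symmetric] S' by blast
  qed
  have NN: "NNZ E (K \<union> U) J a {} = NNZ E' (K' \<union> U') J' a' {}" using SL[of "{}"] by simp
  have hyps': "hyps D Vs' E' V' U' K' J' a' v0"
    unfolding hyps_def
  proof (intro conjI)
    show "simple_graph Vs' E'" unfolding Vs'_def E'alt by (rule simple_sub[OF hd(1)])
    show "\<not> has_cycle E'" using nocycle_mono[OF hd(2) E'E] .
    show "V' \<union> U' = Vs'" unfolding V'_def U'_def Vs'_def using hd(3) lU uV by blast
    show "V' \<inter> U' = {}" unfolding V'_def U'_def using hd(4) by blast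
    show "\<forall>e\<in>E'. \<exists>v\<in>V'. \<exists>u\<in>U'. e = {v, u}"
    proof
      fix e assume "e \<in> E'"
      then have "e \<in> E" "l \<notin> e" "u \<notin> e" unfolding E'_def by auto
      then obtain v u0 where "v \<in> V" "u0 \<in> U" "e = {v, u0}" using hd(5) by blast
      then show "\<exists>v\<in>V'. \<exists>u\<in>U'. e = {v, u}" unfolding V'_def U'_def using \<open>l \<notin> e\<close> \<open>u \<notin> e\<close> by blast
    qed
    show "\<forall>u'\<in>U'. 2 \<le> degree E' u'"
    proof
      fix u' assume "u' \<in> U'"
      then have u'U: "u' \<in> U" "u' \<noteq> u" unfolding U'_def by auto
      have "degree E' u' = degree E u'"
        unfolding E'_def
      proof (rule degree_same)
        fix e assume eE: "e \<in> E" and ue: "u' \<in> e"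
        have "l \<notin> e"
        proof
          assume "l \<in> e"
          have lfa: "\<And>e. e \<in> E \<Longrightarrow> l \<in> e \<Longrightarrow> e = {l, u}" using lf by (simp add: leaf_def)
          have "e = {l, u}" using lfa[OF eE \<open>l \<in> e\<close>] .
          then show False using ue u'U lU by auto
        qed
        moreover have "u \<notin> e"
        proof
          assume "u \<in> e"
          obtain v u0 where "v \<in> V" "u0 \<in> U" "e = {v, u0}" using hd(5) eE by blast
          then show False using \<open>u \<in> e\<close> ue u'U uU hd(4) by auto
        qed
        ultimately show "l \<notin> e \<and> u \<notin> e" by simp
      qed
      then show "2 \<le> degree E' u'" using hd(6) u'U by simp
    qed
    show "K' \<union> J' = V'" unfolding K'_def J'_def V'_def using hd(7) lK wV wl by blast
    show "K' \<inter> J' = {}" unfolding K'_def J'_def using hd(8) by blast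
    show "v0 \<in> J'" unfolding J'_def using hd(9) lv0 by simp
    show "\<forall>v\<in>J'. 0 < a' v"
    proof
      fix v assume "v \<in> J'"
      show "0 < a' v"
      proof (cases "v = w")
        case True
        have "0 \<le> (if w \<in> J then a w else 0)" using hd(10) by (simp add: less_imp_le)
        then show ?thesis unfolding a'_def True using al by simp
      next
        case False
        then show ?thesis using \<open>v \<in> J'\<close> hd(10) unfolding a'_def J'_def by simp
      qed
    qed
    show "\<forall>v\<in>V'. \<forall>u'\<in>U'. if {v, u'} \<in> E' then D v u' = 1 \<or> D v u' = -1 else D v u' = 0"
    proof (intro ballI)
      fix v u' assume "v \<in> V'" "u' \<in> U'"
      then have "v \<in> V" "u' \<in> U" "v \<noteq> l" "u' \<noteq> u" unfolding V'_def U'_def by auto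
      moreover have "v \<noteq> u" "u' \<noteq> l" using \<open>v \<in> V\<close> \<open>u' \<in> U\<close> uV lU by auto
      ultimately have "{v, u'} \<in> E' \<longleftrightarrow> {v, u'} \<in> E" unfolding E'_def by auto
      then show "if {v, u'} \<in> E' then D v u' = 1 \<or> D v u' = -1 else D v u' = 0"
        using hd(11) \<open>v \<in> V\<close> \<open>u' \<in> U\<close> by simp
    qed
    show "0 < NNZ E' (K' \<union> U') J' a' {}" using NN hd(12) by simp
  qed
  have "Vs' \<subset> Vs" using lVs unfolding Vs'_def by blast
  then have "card Vs' < card Vs" using psubset_card_mono[OF hb(1)] by blast
  then have "concl D E' V' U' K' J' a' v0" using IH hyps' by blast
  then obtain \<phi>' where ph: "\<forall>u\<in>U'. (\<Sum>v\<in>V'. \<phi>' v * D v u) = 0" "\<phi>' v0 = 1"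
    "(\<Sum>v\<in>J'. a' v * (\<phi>' v)\<^sup>2) = a' v0 * NNZ E' (K' \<union> U') J' a' {} / NNZ E' (K' \<union> U') J' a' {v0}"
    unfolding concl_def by blast
  define \<phi> where "\<phi> = \<phi>'(l := - D l u * D w u * \<phi>' w)"
  have Dlu: "D l u * D l u = 1" using hd(11) lV uU luE by (intro D_sq) simp
  have finV': "finite V'" unfolding V'_def using hb(3) by simp
  have wV': "w \<in> V'" unfolding V'_def using wV wl by simp
  have sumV: "\<And>u'. (\<Sum>v\<in>V. \<phi> v * D v u') = \<phi> l * D l u' + (\<Sum>v\<in>V'. \<phi>' v * D v u')"
  proof -
    fix u'
    have "(\<Sum>v\<in>V. \<phi> v * D v u') = \<phi> l * D l u' + (\<Sum>v\<in>V'. \<phi> v * D v u')"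
      unfolding V'_def using sum.remove[OF hb(3) lV] by blast
    moreover have "(\<Sum>v\<in>V'. \<phi> v * D v u') = (\<Sum>v\<in>V'. \<phi>' v * D v u')"
      unfolding \<phi>_def V'_def by (intro sum.cong) auto
    ultimately show "(\<Sum>v\<in>V. \<phi> v * D v u') = \<phi> l * D l u' + (\<Sum>v\<in>V'. \<phi>' v * D v u')" by simp
  qed
  have sumVu: "(\<Sum>v\<in>V'. \<phi>' v * D v u) = \<phi>' w * D w u"
  proof -
    have "(\<Sum>v\<in>V'. \<phi>' v * D v u) = \<phi>' w * D w u + (\<Sum>v\<in>V' - {w}. \<phi>' v * D v u)"
      using sum.remove[OF finV' wV'] by blast
    moreover have "(\<Sum>v\<in>V' - {w}. \<phi>' v * D v u) = 0"
    proof (rule sum.neutral, rule ballI)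
      fix v assume "v \<in> V' - {w}"
      then have "v \<in> V" "v \<noteq> w" "v \<noteq> l" unfolding V'_def by auto
      then have "{v, u} \<notin> E" using only by blast
      then have "D v u = 0" using hd(11) \<open>v \<in> V\<close> uU by auto
      then show "\<phi>' v * D v u = 0" by simp
    qed
    ultimately show ?thesis by simp
  qed
  show ?thesis unfolding concl_def
  proof (intro exI conjI ballI)
    fix u' assume u'U: "u' \<in> U"
    show "(\<Sum>v\<in>V. \<phi> v * D v u') = 0"
    proof (cases "u' = u")
      case True
      have "\<phi> l * D l u = - (D l u * D l u) * D w u * \<phi>' w" unfolding \<phi>_def by simp
      then show ?thesis using sumV[of u] sumVu Dlu True by simp
    next
      case False
      have "{l, u'} \<notin> E" using leaf_other[OF lf] False u'U lU by blast
      then have "D l u' = 0" using hd(11) lV u'U by auto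
      moreover have "u' \<in> U'" unfolding U'_def using u'U False by simp
      ultimately show ?thesis using sumV[of u'] ph(1) by simp
    qed
  next
    show "\<phi> v0 = 1" unfolding \<phi>_def using ph(2) lv0 by simp
  next
    have finJl: "finite (J - {l})" using hb(5) by simp
    define R where "R = (\<Sum>v\<in>J - {l} - {w}. a v * (\<phi>' v)\<^sup>2)"
    have s1: "(\<Sum>v\<in>J. a v * (\<phi> v)\<^sup>2) = a l * (\<phi> l)\<^sup>2 + (\<Sum>v\<in>J - {l}. a v * (\<phi>' v)\<^sup>2)"
    proof -
      have "(\<Sum>v\<in>J. a v * (\<phi> v)\<^sup>2) = a l * (\<phi> l)\<^sup>2 + (\<Sum>v\<in>J - {l}. a v * (\<phi> v)\<^sup>2)"
        using sum.remove[OF hb(5) lJ, of "\<lambda>v. a v * (\<phi> v)\<^sup>2"] by simp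
      moreover have "(\<Sum>v\<in>J - {l}. a v * (\<phi> v)\<^sup>2) = (\<Sum>v\<in>J - {l}. a v * (\<phi>' v)\<^sup>2)"
        unfolding \<phi>_def by (intro sum.cong) auto
      ultimately show ?thesis by simp
    qed
    have s2: "(\<Sum>v\<in>J - {l}. a v * (\<phi>' v)\<^sup>2) = (if w \<in> J then a w * (\<phi>' w)\<^sup>2 else 0) + R"
    proof (cases "w \<in> J")
      case True
      then have "w \<in> J - {l}" using wl by simp
      then show ?thesis unfolding R_def using sum.remove[OF finJl, of w "\<lambda>v. a v * (\<phi>' v)\<^sup>2"] True by simp
    next
      case False
      then have "J - {l} - {w} = J - {l}" by blast
      then show ?thesis unfolding R_def using False by simp
    qed
    have s3: "(\<Sum>v\<in>J'. a' v * (\<phi>' v)\<^sup>2) = a' w * (\<phi>' w)\<^sup>2 + R"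
    proof -
      have "(\<Sum>v\<in>J'. a' v * (\<phi>' v)\<^sup>2) = a' w * (\<phi>' w)\<^sup>2 + (\<Sum>v\<in>J - {l} - {w}. a' v * (\<phi>' v)\<^sup>2)"
        unfolding J'_def using sum.insert_remove[OF finJl, of "\<lambda>v. a' v * (\<phi>' v)\<^sup>2" w] by simp
      moreover have "(\<Sum>v\<in>J - {l} - {w}. a' v * (\<phi>' v)\<^sup>2) = R"
        unfolding R_def a'_def by (intro sum.cong) auto
      ultimately show ?thesis by simp
    qed
    have phl: "(\<phi> l)\<^sup>2 = (\<phi>' w)\<^sup>2"
    proof -
      have "(\<phi> l)\<^sup>2 = (D l u * D l u) * ((D w u * \<phi>' w))\<^sup>2" unfolding \<phi>_def
        by (simp add: power2_eq_square algebra_simps)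
      also have "\<dots> = (D w u * D w u) * (\<phi>' w)\<^sup>2" using Dlu by (simp add: power2_eq_square algebra_simps)
      also have "D w u * D w u = 1" using hd(11) wV uU wuE by (intro D_sq) simp
      finally show ?thesis by simp
    qed
    have "(\<Sum>v\<in>J. a v * (\<phi> v)\<^sup>2) = (\<Sum>v\<in>J'. a' v * (\<phi>' v)\<^sup>2)"
      using s1 s2 s3 phl unfolding a'_def by (simp add: algebra_simps)
    also have "\<dots> = a' v0 * NNZ E' (K' \<union> U') J' a' {} / NNZ E' (K' \<union> U') J' a' {v0}" by (rule ph(3))
    also have "\<dots> = a v0 * NNZ E (K \<union> U) J a {} / NNZ E (K \<union> U) J a {v0}"
    proof (cases "w = v0")
      case True
      have aw: "0 < a w" using hd(10) hd(9) True by simp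
      have "0 \<le> (if w \<in> J then a w else 0)" using aw by simp
      then have aw': "0 < a' w" unfolding a'_def using al by simp
      have "a' w * NNZ E (K \<union> U) J a {v0} = a w * NNZ E' (K' \<union> U') J' a' {v0}"
        using SL[of "{v0}"] lv0 v0u True hd(9) by simp
      then show ?thesis using ratio_lemma[OF aw aw', of "NNZ E (K \<union> U) J a {v0}" "NNZ E' (K' \<union> U') J' a' {v0}"
          "NNZ E (K \<union> U) J a {}"] NN True by simp
    next
      case False
      have "NNZ E (K \<union> U) J a {v0} = NNZ E' (K' \<union> U') J' a' {v0}"
        using SL[of "{v0}"] lv0 v0u False by simp
      moreover have "a' v0 = a v0" unfolding a'_def using False by simp
      ultimately show ?thesis using NN by simp
    qed
    finally show "(\<Sum>v\<in>J. a v * (\<phi> v)\<^sup>2) = a v0 * NNZ E (K \<union> U) J a {} / NNZ E (K \<union> U) J a {v0}" .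
  qed
qed

lemma case_base:
  assumes H: "hyps D Vs E V U K J a v0" and iso: "\<forall>e\<in>E. v0 \<notin> e"
  shows "concl D E V U K J a v0"
proof -
  note hd = hypsD[OF H] and hb = hyps_basic[OF H]
  have v0V: "v0 \<in> V" using hd(7) hd(9) by blast
  define \<phi> where "\<phi> = (\<lambda>v. if v = v0 then (1::real) else 0)"
  have eqZ: "{M \<in> mats E (K \<union> U). {v0} \<inter> \<Union>M = {}} = {M \<in> mats E (K \<union> U). {} \<inter> \<Union>M = {}}"
  proof -
    have "\<And>M. M \<in> mats E (K \<union> U) \<Longrightarrow> v0 \<notin> \<Union>M"
    proof -
      fix M assume "M \<in> mats E (K \<union> U)"
      then have "M \<subseteq> E" unfolding mats_def using matching_E by blast
      then show "v0 \<notin> \<Union>M" using iso by blast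
    qed
    then show ?thesis by blast
  qed
  then have NN: "NNZ E (K \<union> U) J a {v0} = NNZ E (K \<union> U) J a {}" unfolding NNZ_def by simp
  show ?thesis unfolding concl_def
  proof (intro exI conjI ballI)
    fix u assume uU: "u \<in> U"
    have "{v0, u} \<notin> E" using iso by blast
    then have "D v0 u = 0" using hd(11) v0V uU by auto
    moreover have "(\<Sum>v\<in>V. \<phi> v * D v u) = \<phi> v0 * D v0 u"
      using sum.remove[OF hb(3) v0V, of "\<lambda>v. \<phi> v * D v u"] unfolding \<phi>_def by simp
    ultimately show "(\<Sum>v\<in>V. \<phi> v * D v u) = 0" by simp
  next
    show "\<phi> v0 = 1" unfolding \<phi>_def by simp
  next
    have "(\<Sum>v\<in>J. a v * (\<phi> v)\<^sup>2) = a v0 * (\<phi> v0)\<^sup>2"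
      using sum.remove[OF hb(5) hd(9), of "\<lambda>v. a v * (\<phi> v)\<^sup>2"] unfolding \<phi>_def by simp
    also have "\<dots> = a v0" unfolding \<phi>_def by simp
    also have "\<dots> = a v0 * NNZ E (K \<union> U) J a {} / NNZ E (K \<union> U) J a {v0}"
      using NN hd(12) by simp
    finally show "(\<Sum>v\<in>J. a v * (\<phi> v)\<^sup>2) = a v0 * NNZ E (K \<union> U) J a {} / NNZ E (K \<union> U) J a {v0}" .
  qed
qed

lemma gen: "hyps D Vs E V U K J a v0 \<Longrightarrow> concl D E V U K J a v0"
proof (induction "card Vs" arbitrary: Vs E V U K J a v0 rule: less_induct)
  case less
  note H = less.prems
  have IH: "\<And>Vs' E' V' U' K' J' a' v0'. card Vs' < card Vs \<Longrightarrow>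
       hyps D Vs' E' V' U' K' J' a' v0' \<Longrightarrow> concl D E' V' U' K' J' a' v0'"
    using less.hyps by blast
  note hd = hypsD[OF H] and hb = hyps_basic[OF H]
  have v0Vs: "v0 \<in> Vs" using hd(3) hd(7) hd(9) by blast
  have v0V: "v0 \<in> V" using hd(7) hd(9) by blast
  note LP = longest_path_structure[OF hd(1) hd(2) v0Vs]
  show ?case
  proof (cases "\<forall>e\<in>E. v0 \<notin> e")
    case True
    then show ?thesis using case_base[OF H] by blast
  next
    case False
    then obtain l u where lv0: "l \<noteq> v0" and lf: "leaf E l u"
      and rest: "u = v0 \<or> (\<exists>w. w \<noteq> l \<and> {w, u} \<in> E \<and>
        (\<forall>y. {y, u} \<in> E \<longrightarrow> y = w \<or> y = l \<or> y \<noteq> v0 \<and> leaf E y u))"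
      using LP by blast
    have luE: "{l, u} \<in> E" using lf by (simp add: leaf_def)
    have lVU: "l \<in> V \<or> l \<in> U" using hb(9)[OF luE] .
    have lV: "l \<in> V"
    proof (rule ccontr)
      assume "l \<notin> V"
      then have lU: "l \<in> U" using lVU by simp
      have "{e\<in>E. l \<in> e} = {{l, u}}" using lf unfolding leaf_def by auto
      then have "degree E l = 1" unfolding degree_def by simp
      then show False using hd(6) lU by fastforce
    qed
    have uU: "u \<in> U" using hb(7)[OF luE lV] .
    have uv0: "u \<noteq> v0" using uU v0V hd(4) by blast
    then obtain w where wl: "w \<noteq> l" and wuE: "{w, u} \<in> E"
      and nb: "\<forall>y. {y, u} \<in> E \<longrightarrow> y = w \<or> y = l \<or> y \<noteq> v0 \<and> leaf E y u"
      using rest by blast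
    show ?thesis
    proof (cases "l \<in> K")
      case True
      show ?thesis by (rule case_kleaf[OF H lf True]) (fact IH)
    next
      case False
      then have lJ: "l \<in> J" using lV hd(7) by blast
      show ?thesis
      proof (cases "\<exists>y. {y, u} \<in> E \<and> y \<noteq> w \<and> y \<noteq> l")
        case True
        then obtain y where yuE: "{y, u} \<in> E" and yw: "y \<noteq> w" and yl: "y \<noteq> l" by blast
        then have yv0: "y \<noteq> v0" and yf: "leaf E y u" using nb by blast+
        have uyE: "{u, y} \<in> E" using yuE by (simp add: insert_commute)
        have yV: "y \<in> V" using hb(8)[OF uyE uU] .
        show ?thesis
        proof (cases "y \<in> K")
          case True
          show ?thesis by (rule case_kleaf[OF H yf True]) (fact IH)
        next
          case False
          then have yJ: "y \<in> J" using yV hd(7) by blast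
          have ly: "l \<noteq> y" using yl by simp
          have wy: "w \<noteq> y" using yw by simp
          show ?thesis by (rule case_parallel[OF H lf yf ly lJ yJ lv0 yv0 wuE wy wl]) (fact IH)
        qed
      next
        case False
        then have only: "\<forall>y. {y, u} \<in> E \<longrightarrow> y = w \<or> y = l" by blast
        show ?thesis by (rule case_series[OF H lf lJ lv0 wuE wl only]) (fact IH)
      qed
    qed
  qed
qed

lemma NNZ_one_card:
  assumes "finite E"
  shows "NNZ E S J (\<lambda>_. 1) Z = real (card {M \<in> mats E S. Z \<inter> \<Union>M = {}})"
  unfolding NNZ_def wt_def by simp

lemma card_split_P:
  assumes "finite A" shows "card A = card {x\<in>A. P x} + card {x\<in>A. \<not> P x}"
proof -
  have "A = {x\<in>A. P x} \<union> {x\<in>A. \<not> P x}" by blast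
  moreover have "{x\<in>A. P x} \<inter> {x\<in>A. \<not> P x} = {}" by blast
  ultimately show ?thesis using assms card_Un_disjoint[of "{x\<in>A. P x}" "{x\<in>A. \<not> P x}"]
    by (metis (no_types, lifting) finite_Un)
qed

theorem claim2p11:
  fixes k :: nat and Vs :: "'a set" and E :: "'a set set" and r :: 'a
    and D :: "'a \<Rightarrow> 'a \<Rightarrow> real" and K J :: "'a set" and v0 :: 'a
  assumes "k \<ge> 1"
    and "valid_tree k Vs E r"
    and "signed_incidence Vs E r D"
    and "K \<union> J = even_verts Vs E r" and "K \<inter> J = {}"
    and "mcount Vs E r K > 0"
    and "v0 \<in> J"
  shows "\<exists>\<phi> :: 'a \<Rightarrow> real.
           (\<forall>u\<in>odd_verts Vs E r. (\<Sum>v\<in>even_verts Vs E r. \<phi> v * D v u) = 0) \<and>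
           \<phi> v0 = 1 \<and>
           (\<Sum>v\<in>J. (\<phi> v)\<^sup>2) = real (mcount Vs E r K) /
              (real (mcount Vs E r K) - real (mcount Vs E r (insert v0 K)))"
proof -
  define V where "V = even_verts Vs E r"
  define U where "U = odd_verts Vs E r"
  have tree: "is_tree Vs E" and rV: "r \<in> Vs" and deg: "\<forall>u\<in>U. degree E u = k + 1"
    using assms(2) unfolding valid_tree_def U_def by auto
  have sg: "simple_graph Vs E" and nc: "\<not> has_cycle E" using tree unfolding is_tree_def by auto
  have finE: "finite E" using simple_E_pow[OF sg] sg unfolding simple_graph_def
    by (meson finite_Pow_iff finite_subset)
  define S where "S = K \<union> U"
  have mK: "mcount Vs E r K = card (mats E S)"
    unfolding mcount_def mats_def S_def U_def by simp
  have mK0: "mcount Vs E r (insert v0 K) = card {M \<in> mats E S. v0 \<in> \<Union>M}"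
  proof -
    have "{M. is_matching E M \<and> insert v0 K \<union> odd_verts Vs E r \<subseteq> \<Union>M} = {M \<in> mats E S. v0 \<in> \<Union>M}"
      unfolding mats_def S_def U_def by blast
    then show ?thesis unfolding mcount_def by simp
  qed
  have N: "NNZ E S J (\<lambda>_. 1) {} = real (mcount Vs E r K)"
    using NNZ_one_card[OF finE] mK by simp
  have N0: "NNZ E S J (\<lambda>_. 1) {v0} = real (mcount Vs E r K) - real (mcount Vs E r (insert v0 K))"
  proof -
    have "card (mats E S) = card {M \<in> mats E S. v0 \<in> \<Union>M} + card {M \<in> mats E S. v0 \<notin> \<Union>M}"
      using card_split_P[OF finite_mats[OF finE, of S], of "\<lambda>M. v0 \<in> \<Union>M"] by simp
    moreover have "{M \<in> mats E S. {v0} \<inter> \<Union>M = {}} = {M \<in> mats E S. v0 \<notin> \<Union>M}" by blast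
    ultimately show ?thesis using NNZ_one_card[OF finE, of S J "{v0}"] mK mK0 by simp
  qed
  have H: "hyps D Vs E V U K J (\<lambda>_. 1) v0"
    unfolding hyps_def
  proof (intro conjI)
    show "simple_graph Vs E" by (rule sg)
    show "\<not> has_cycle E" by (rule nc)
    show "V \<union> U = Vs" unfolding V_def U_def even_verts_def odd_verts_def by blast
    show "V \<inter> U = {}" unfolding V_def U_def even_verts_def odd_verts_def by blast
    show "\<forall>e\<in>E. \<exists>v\<in>V. \<exists>u\<in>U. e = {v, u}"
    proof
      fix e assume eE: "e \<in> E"
      have "\<forall>e\<in>E. \<exists>x y. x \<noteq> y \<and> x \<in> Vs \<and> y \<in> Vs \<and> e = {x, y}"
        using sg by (simp add: simple_graph_def)
      then obtain x y where xy: "x \<in> Vs" "y \<in> Vs" "e = {x, y}" using eE by blast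
      have par: "even (gdist E r x) \<longleftrightarrow> odd (gdist E r y)"
        using tree_parity[OF tree rV] eE xy(3) by simp
      show "\<exists>v\<in>V. \<exists>u\<in>U. e = {v, u}"
      proof (cases "even (gdist E r x)")
        case True
        then have "x \<in> V" "y \<in> U" using xy par unfolding V_def U_def even_verts_def odd_verts_def by auto
        then show ?thesis using xy(3) by blast
      next
        case False
        then have "y \<in> V" "x \<in> U" using xy par unfolding V_def U_def even_verts_def odd_verts_def by auto
        then show ?thesis using xy(3) by (auto simp: insert_commute)
      qed
    qed
    show "\<forall>u\<in>U. 2 \<le> degree E u" using deg assms(1) by simp
    show "K \<union> J = V" using assms(4) unfolding V_def .
    show "K \<inter> J = {}" by (rule assms(5))
    show "v0 \<in> J" by (rule assms(7))
    show "\<forall>v\<in>J. (0::real) < 1" by simp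
    show "\<forall>v\<in>V. \<forall>u\<in>U. if {v, u} \<in> E then D v u = 1 \<or> D v u = -1 else D v u = 0"
      using assms(3) unfolding signed_incidence_def V_def U_def .
    show "0 < NNZ E (K \<union> U) J (\<lambda>_. 1) {}" using N assms(6) unfolding S_def by simp
  qed
  obtain \<phi> where ph: "\<forall>u\<in>U. (\<Sum>v\<in>V. \<phi> v * D v u) = 0" "\<phi> v0 = 1"
    "(\<Sum>v\<in>J. 1 * (\<phi> v)\<^sup>2) = 1 * NNZ E (K \<union> U) J (\<lambda>_. 1) {} / NNZ E (K \<union> U) J (\<lambda>_. 1) {v0}"
    using gen[OF H] unfolding concl_def by blast
  show ?thesis
  proof (intro exI conjI)
    show "\<forall>u\<in>odd_verts Vs E r. (\<Sum>v\<in>even_verts Vs E r. \<phi> v * D v u) = 0"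
      using ph(1) unfolding U_def V_def .
    show "\<phi> v0 = 1" by (rule ph(2))
    show "(\<Sum>v\<in>J. (\<phi> v)\<^sup>2) = real (mcount Vs E r K) /
              (real (mcount Vs E r K) - real (mcount Vs E r (insert v0 K)))"
      using ph(3) N N0 unfolding S_def by simp
  qed
qed

end
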